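(* For every $n\ge0$ there is a bijection $\varphi:\mathcal S_n\to\mathfrak S_{n+1}(1243,2143)$ such that $\tau_k(\varphi(\pi))=\tau_k(\pi)$ for all $k\ge1$ and all $\pi\in\mathcal S_n$. Consequently, for each $k\ge2$, $\varphi$ restricts to a bijection between the Schröder paths in $\mathcal S_n$ that do not cross the line $y-x=k-2$ and $\mathfrak S_{n+1}(1243,2143,12\ldots k)$.
   Context: $\mathcal S_n$ is the set of Schröder paths: lattice paths from $(0,0)$ to $(n,n)$ using east $(1,0)$, north $(0,1)$ and diagonal $(1,1)$ steps that never go below $y=x$. For an east or diagonal step $s$ whose left-most point is $(a,c)$, its height is $ht(s)=c-a$. For a Schröder path $\pi$ and $k\ge1$, $\tau_k(\pi)=\binom{0}{k-1}+\sum_s\binom{ht(s)}{k-1}$, the sum over all east and diagonal steps $s$ of $\pi$ (with $\binom{i}{j}=0$ if $j<0$ or $i<j$). For a permutation $\pi$, $\tau_k(\pi)$ is the number of increasing subsequences of length $k$. $\mathfrak S_m(R)$ is the set of permutations of $\{1,\dots,m\}$ avoiding every pattern in $R$ (no subsequence with the same relative order as a pattern). *)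

theory Defs
  imports Main "HOL-Library.Sublist"
begin

datatype step = East | North | Diag

fun step_end :: "int \<times> int \<Rightarrow> step \<Rightarrow> int \<times> int" where
  "step_end (a, c) East = (a + 1, c)"
| "step_end (a, c) North = (a, c + 1)"
| "step_end (a, c) Diag = (a + 1, c + 1)"

fun walk :: "int \<times> int \<Rightarrow> step list \<Rightarrow> (int \<times> int) list" where
  "walk p [] = [p]"
| "walk p (s # ss) = p # walk (step_end p s) ss"

fun heights :: "int \<times> int \<Rightarrow> step list \<Rightarrow> int list" where
  "heights p [] = []"
| "heights (a, c) (s # ss) =
     (if s = North then [] else [c - a]) @ heights (step_end (a, c) s) ss"

definition schroeder :: "nat \<Rightarrow> step list set" where
  "schroeder n = {ss. last (walk (0, 0) ss) = (int n, int n)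
                      \<and> (\<forall>(a, c) \<in> set (walk (0, 0) ss). a \<le> c)}"

definition tau_path :: "nat \<Rightarrow> step list \<Rightarrow> nat" where
  "tau_path k ss = (0 choose (k - 1))
      + sum_list (map (\<lambda>h. nat h choose (k - 1)) (heights (0, 0) ss))"

definition no_cross :: "int \<Rightarrow> step list \<Rightarrow> bool" where
  "no_cross d ss = (\<forall>(a, c) \<in> set (walk (0, 0) ss). c - a \<le> d)"

definition perms :: "nat \<Rightarrow> nat list set" where
  "perms m = {xs. distinct xs \<and> set xs = {1..m}}"

definition order_iso :: "nat list \<Rightarrow> nat list \<Rightarrow> bool" where
  "order_iso ys p = (length ys = length p \<and>
     (\<forall>i < length p. \<forall>j < length p. (ys ! i < ys ! j) = (p ! i < p ! j)))"

definition contains :: "nat list \<Rightarrow> nat list \<Rightarrow> bool" where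
  "contains xs p = (\<exists>ys. subseq ys xs \<and> order_iso ys p)"

definition avoiders :: "nat \<Rightarrow> nat list set \<Rightarrow> nat list set" where
  "avoiders m R = {xs \<in> perms m. \<forall>p \<in> R. \<not> contains xs p}"

definition tau_perm :: "nat \<Rightarrow> nat list \<Rightarrow> nat" where
  "tau_perm k xs = card {I. I \<subseteq> {..<length xs} \<and> card I = k \<and>
       (\<forall>i \<in> I. \<forall>j \<in> I. i < j \<longrightarrow> xs ! i < xs ! j)}"

end

theory Submission
  imports Defs
begin

lemma subseq_idx:
  assumes "subseq ys xs"
  shows "\<exists>ix. sorted_wrt (<) ix \<and> length ix = length ys \<and> (\<forall>i\<in>set ix. i < length xs)
            \<and> ys = map (nth xs) ix"
  using assms
proof (induction rule: list_emb.induct)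
  case (list_emb_Nil ys)
  then show ?case by (intro exI[of _ "[]"]) auto
next
  case (list_emb_Cons xs ys y)
  then obtain ix where "sorted_wrt (<) ix" "length ix = length xs" "\<forall>i\<in>set ix. i < length ys"
     "xs = map (nth ys) ix" by blast
  then show ?case
    by (intro exI[of _ "map Suc ix"]) (auto simp: sorted_wrt_map)
next
  case (list_emb_Cons2 x y xs ys)
  then obtain ix where "sorted_wrt (<) ix" "length ix = length xs" "\<forall>i\<in>set ix. i < length ys"
     "xs = map (nth ys) ix" by blast
  then show ?case using list_emb_Cons2.hyps
    by (intro exI[of _ "0 # map Suc ix"]) (auto simp: sorted_wrt_map)
qed

lemma idx_subseq:
  assumes "sorted_wrt (<) ix" "\<forall>i\<in>set ix. i < length xs"
  shows "subseq (map (nth xs) ix) xs"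
  using assms
proof (induction xs arbitrary: ix)
  case Nil
  then show ?case by (cases ix) auto
next
  case (Cons x xs)
  show ?case
  proof (cases ix)
    case Nil
    then show ?thesis by simp
  next
    case (Cons i ix')
    show ?thesis
    proof (cases i)
      case 0
      have "\<forall>j\<in>set ix'. j > 0" using Cons.prems(1) \<open>ix = i # ix'\<close> 0 by auto
      let ?js = "map (\<lambda>j. j - 1) ix'"
      have s: "sorted_wrt (<) ?js"
        unfolding sorted_wrt_map
        by (rule sorted_wrt_mono_rel[of _ "(<)"])
          (use Cons.prems(1) \<open>ix = i # ix'\<close> \<open>\<forall>j\<in>set ix'. j > 0\<close> in auto)
      have b: "\<forall>j\<in>set ?js. j < length xs" using Cons.prems(2) \<open>ix = i # ix'\<close> \<open>\<forall>j\<in>set ix'. j > 0\<close>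
        by auto
      have e: "map (nth (x # xs)) ix' = map (nth xs) ?js"
        using \<open>\<forall>j\<in>set ix'. j > 0\<close> by (auto simp: nth_Cons')
      have "subseq (map (nth (x # xs)) ix') xs" using Cons.IH[OF s b] e by metis
      then show ?thesis using \<open>ix = i # ix'\<close> 0 by simp
    next
      case (Suc i')
      have pos: "\<forall>j\<in>set ix. j > 0" using Cons.prems(1) \<open>ix = i # ix'\<close> Suc by auto
      let ?js = "map (\<lambda>j. j - 1) ix"
      have s: "sorted_wrt (<) ?js"
        unfolding sorted_wrt_map
        by (rule sorted_wrt_mono_rel[of _ "(<)"]) (use Cons.prems(1) pos in auto)
      have b: "\<forall>j\<in>set ?js. j < length xs" using Cons.prems(2) pos by auto
      have e: "map (nth (x # xs)) ix = map (nth xs) ?js"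
        using pos by (auto simp: nth_Cons')
      have "subseq (map (nth (x # xs)) ix) xs" using Cons.IH[OF s b] e by metis
      then show ?thesis by (simp add: list_emb_Cons)
    qed
  qed
qed

lemma contains_idx:
  "contains xs p \<longleftrightarrow> (\<exists>ix. sorted_wrt (<) ix \<and> length ix = length p \<and> (\<forall>i\<in>set ix. i < length xs)
        \<and> (\<forall>i<length p. \<forall>j<length p. (xs ! (ix ! i) < xs ! (ix ! j)) = (p ! i < p ! j)))"
  unfolding contains_def order_iso_def
proof safe
  fix ys assume "subseq ys xs" "length ys = length p"
    "\<forall>i<length p. \<forall>j<length p. (ys ! i < ys ! j) = (p ! i < p ! j)"
  then show "\<exists>ix. sorted_wrt (<) ix \<and> length ix = length p \<and> (\<forall>i\<in>set ix. i < length xs)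
        \<and> (\<forall>i<length p. \<forall>j<length p. (xs ! (ix ! i) < xs ! (ix ! j)) = (p ! i < p ! j))"
  proof -
    obtain ix where ix: "sorted_wrt (<) ix" "length ix = length ys" "\<forall>i\<in>set ix. i < length xs"
      "ys = map (nth xs) ix" using subseq_idx[OF \<open>subseq ys xs\<close>] by blast
    have "\<forall>i<length p. \<forall>j<length p. (xs ! (ix ! i) < xs ! (ix ! j)) = (p ! i < p ! j)"
    proof (intro allI impI)
      fix i j assume "i < length p" "j < length p"
      then have "ys ! i = xs ! (ix ! i)" "ys ! j = xs ! (ix ! j)"
        using ix \<open>length ys = length p\<close> by auto
      then show "(xs ! (ix ! i) < xs ! (ix ! j)) = (p ! i < p ! j)"
        using \<open>\<forall>i<length p. \<forall>j<length p. (ys ! i < ys ! j) = (p ! i < p ! j)\<close>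
          \<open>i < length p\<close> \<open>j < length p\<close> by metis
    qed
    with ix \<open>length ys = length p\<close> show ?thesis by metis
  qed
next
  fix ix assume "sorted_wrt (<) ix" "length ix = length p" "\<forall>i\<in>set ix. i < length xs"
    "\<forall>i<length p. \<forall>j<length p. (xs ! (ix ! i) < xs ! (ix ! j)) = (p ! i < p ! j)"
  then show "\<exists>ys. subseq ys xs \<and> length ys = length p \<and> (\<forall>i<length p. \<forall>j<length p. (ys ! i < ys ! j) = (p ! i < p ! j))"
    by (intro exI[of _ "map (nth xs) ix"]) (auto intro: idx_subseq)
qed

definition avC :: "nat list \<Rightarrow> bool" where
  "avC t \<longleftrightarrow> \<not> (\<exists>a b c d. a < b \<and> b < c \<and> c < d \<and> d < length t \<and>
        t ! a < t ! d \<and> t ! b < t ! d \<and> t ! d < t ! c)"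

lemma sorted4: "sorted_wrt (<) [a,b,c,d::nat] \<longleftrightarrow> a < b \<and> b < c \<and> c < d"
  by auto

lemma m4: "i < 4 \<Longrightarrow> xs ! ([a,b,c,d] ! i) = [xs!a,xs!b,xs!c,xs!d] ! i"
  using nth_map[of i "[a,b,c,d]" "nth xs"] by simp

lemma contains4:
  assumes "length p = 4"
  shows "contains xs p \<longleftrightarrow> (\<exists>a b c d. a < b \<and> b < c \<and> c < d \<and> d < length xs \<and>
     (\<forall>i<4. \<forall>j<4. ([xs!a,xs!b,xs!c,xs!d] ! i < [xs!a,xs!b,xs!c,xs!d] ! j) = (p ! i < p ! j)))"
    (is "_ \<longleftrightarrow> ?R")
proof -
  have "(\<exists>ix. sorted_wrt (<) ix \<and> length ix = 4 \<and> (\<forall>i\<in>set ix. i < length xs)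
        \<and> (\<forall>i<4. \<forall>j<4. (xs ! (ix ! i) < xs ! (ix ! j)) = (p ! i < p ! j))) \<longleftrightarrow> ?R"
  proof
    assume "\<exists>ix. sorted_wrt (<) ix \<and> length ix = 4 \<and> (\<forall>i\<in>set ix. i < length xs)
        \<and> (\<forall>i<4. \<forall>j<4. (xs ! (ix ! i) < xs ! (ix ! j)) = (p ! i < p ! j))"
    then obtain ix where h: "sorted_wrt (<) ix" "length ix = 4" "(\<forall>i\<in>set ix. i < length xs)"
        "(\<forall>i<4. \<forall>j<4. (xs ! (ix ! i) < xs ! (ix ! j)) = (p ! i < p ! j))" by blast
    then obtain a b c d where "ix = [a,b,c,d]"
      by (cases ix; cases "tl ix"; cases "tl (tl ix)"; cases "tl (tl (tl ix))"; auto)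
    have hx: "\<And>i. i < 4 \<Longrightarrow> xs ! (ix ! i) = [xs!a,xs!b,xs!c,xs!d] ! i"
      using m4 \<open>ix = [a,b,c,d]\<close> by simp
    have o: "a < b \<and> b < c \<and> c < d" using h(1) \<open>ix = [a,b,c,d]\<close> by simp
    have l: "d < length xs" using h(3) \<open>ix = [a,b,c,d]\<close> by simp
    have "\<forall>i<4. \<forall>j<4. ([xs!a,xs!b,xs!c,xs!d] ! i < [xs!a,xs!b,xs!c,xs!d] ! j) = (p ! i < p ! j)"
      using h(4) hx by simp
    with o l show "\<exists>a b c d. a < b \<and> b < c \<and> c < d \<and> d < length xs \<and>
     (\<forall>i<4. \<forall>j<4. ([xs!a,xs!b,xs!c,xs!d] ! i < [xs!a,xs!b,xs!c,xs!d] ! j) = (p ! i < p ! j))"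
      by blast
  next
    assume "\<exists>a b c d. a < b \<and> b < c \<and> c < d \<and> d < length xs \<and>
     (\<forall>i<4. \<forall>j<4. ([xs!a,xs!b,xs!c,xs!d] ! i < [xs!a,xs!b,xs!c,xs!d] ! j) = (p ! i < p ! j))"
    then obtain a b c d where o: "a < b \<and> b < c \<and> c < d \<and> d < length xs" and
     h4: "(\<forall>i<4. \<forall>j<4. ([xs!a,xs!b,xs!c,xs!d] ! i < [xs!a,xs!b,xs!c,xs!d] ! j) = (p ! i < p ! j))" by blast
    have hx: "\<And>i. i < 4 \<Longrightarrow> xs ! ([a,b,c,d] ! i) = [xs!a,xs!b,xs!c,xs!d] ! i"
      by (rule m4)
    have "\<forall>i<4. \<forall>j<4. (xs ! ([a,b,c,d] ! i) < xs ! ([a,b,c,d] ! j)) = (p ! i < p ! j)"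
      using h4 hx by simp
    moreover have "sorted_wrt (<) [a,b,c,d]" "\<forall>i\<in>set [a,b,c,d]. i < length xs" using o by auto
    ultimately show "\<exists>ix. sorted_wrt (<) ix \<and> length ix = 4 \<and> (\<forall>i\<in>set ix. i < length xs)
        \<and> (\<forall>i<4. \<forall>j<4. (xs ! (ix ! i) < xs ! (ix ! j)) = (p ! i < p ! j))"
      by (intro exI[of _ "[a,b,c,d]"]) simp
  qed
  then show ?thesis using contains_idx[of xs p] assms by simp
qed

lemma all4: "(\<forall>i<(4::nat). P i) \<longleftrightarrow> P 0 \<and> P 1 \<and> P 2 \<and> P 3"
  by (auto simp: less_Suc_eq numeral_eq_Suc)

lemma nth4: "[a,b,c,d] ! 0 = a" "[a,b,c,d] ! 1 = b" "[a,b,c,d] ! 2 = c" "[a,b,c,d] ! 3 = d"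
  by (simp_all add: numeral_eq_Suc)

lemma g1243: "(\<forall>i<4. \<forall>j<4. ([w,x,y,z::nat] ! i < [w,x,y,z] ! j) = ([1,2,4,3::nat] ! i < [1,2,4,3] ! j)) \<longleftrightarrow> w < x \<and> x < z \<and> z < y"
  unfolding all4 nth4 by simp linarith

lemma g2143: "(\<forall>i<4. \<forall>j<4. ([w,x,y,z::nat] ! i < [w,x,y,z] ! j) = ([2,1,4,3::nat] ! i < [2,1,4,3] ! j)) \<longleftrightarrow> x < w \<and> w < z \<and> z < y"
  unfolding all4 nth4 by simp linarith

lemma c1243: "contains xs [1,2,4,3] \<longleftrightarrow> (\<exists>a b c d. a < b \<and> b < c \<and> c < d \<and> d < length xs \<and>
     xs ! a < xs ! b \<and> xs ! b < xs ! d \<and> xs ! d < xs ! c)"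
proof -
  have e: "(\<forall>i<4. \<forall>j<4. ([xs!a,xs!b,xs!c,xs!d] ! i < [xs!a,xs!b,xs!c,xs!d] ! j) = ([1,2,4,3::nat] ! i < [1,2,4,3] ! j))
     \<longleftrightarrow> xs ! a < xs ! b \<and> xs ! b < xs ! d \<and> xs ! d < xs ! c" for a b c d
    by (rule g1243)
  have "contains xs [1,2,4,3] \<longleftrightarrow> (\<exists>a b c d. a < b \<and> b < c \<and> c < d \<and> d < length xs \<and>
     (\<forall>i<4. \<forall>j<4. ([xs!a,xs!b,xs!c,xs!d] ! i < [xs!a,xs!b,xs!c,xs!d] ! j) = ([1,2,4,3::nat] ! i < [1,2,4,3] ! j)))"
    by (rule contains4) simp
  then show ?thesis by (simp only: e)
qed

lemma c2143: "contains xs [2,1,4,3] \<longleftrightarrow> (\<exists>a b c d. a < b \<and> b < c \<and> c < d \<and> d < length xs \<and>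
     xs ! b < xs ! a \<and> xs ! a < xs ! d \<and> xs ! d < xs ! c)"
proof -
  have e: "(\<forall>i<4. \<forall>j<4. ([xs!a,xs!b,xs!c,xs!d] ! i < [xs!a,xs!b,xs!c,xs!d] ! j) = ([2,1,4,3::nat] ! i < [2,1,4,3] ! j))
     \<longleftrightarrow> xs ! b < xs ! a \<and> xs ! a < xs ! d \<and> xs ! d < xs ! c" for a b c d
    by (rule g2143)
  have "contains xs [2,1,4,3] \<longleftrightarrow> (\<exists>a b c d. a < b \<and> b < c \<and> c < d \<and> d < length xs \<and>
     (\<forall>i<4. \<forall>j<4. ([xs!a,xs!b,xs!c,xs!d] ! i < [xs!a,xs!b,xs!c,xs!d] ! j) = ([2,1,4,3::nat] ! i < [2,1,4,3] ! j)))"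
    by (rule contains4) simp
  then show ?thesis by (simp only: e)
qed

lemma avC_iff:
  assumes "distinct xs"
  shows "(\<forall>p \<in> {[1,2,4,3], [2,1,4,3]}. \<not> contains xs p) \<longleftrightarrow> avC xs"
proof -
  have d: "xs ! i \<noteq> xs ! j" if "i < length xs" "j < length xs" "i \<noteq> j" for i j
    using assms that nth_eq_iff_index_eq by blast
  have "contains xs [1,2,4,3] \<or> contains xs [2,1,4,3] \<longleftrightarrow> \<not> avC xs"
  proof
    assume "contains xs [1,2,4,3] \<or> contains xs [2,1,4,3]"
    then show "\<not> avC xs"
    proof
      assume "contains xs [1,2,4,3]"
      then obtain a b c d where h: "a < b" "b < c" "c < d" "d < length xs"
        "xs ! a < xs ! b" "xs ! b < xs ! d" "xs ! d < xs ! c" unfolding c1243 by blast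
      have "xs ! a < xs ! d" using h(5,6) by (rule less_trans)
      with h show ?thesis unfolding avC_def by blast
    next
      assume "contains xs [2,1,4,3]"
      then obtain a b c d where h: "a < b" "b < c" "c < d" "d < length xs"
        "xs ! b < xs ! a" "xs ! a < xs ! d" "xs ! d < xs ! c" unfolding c2143 by blast
      have "xs ! b < xs ! d" using h(5,6) by (rule less_trans)
      with h show ?thesis unfolding avC_def by blast
    qed
  next
    assume "\<not> avC xs"
    then obtain a b c d where h: "a < b" "b < c" "c < d" "d < length xs" "xs ! a < xs ! d" "xs ! b < xs ! d"
      "xs ! d < xs ! c" unfolding avC_def by blast
    have "xs ! a \<noteq> xs ! b" using d h by simp
    then consider "xs ! a < xs ! b" | "xs ! b < xs ! a" by linarith
    then show "contains xs [1,2,4,3] \<or> contains xs [2,1,4,3]"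
    proof cases
      case 1
      then have "contains xs [1,2,4,3]" unfolding c1243 using h by blast
      then show ?thesis ..
    next
      case 2
      then have "contains xs [2,1,4,3]" unfolding c2143 using h by blast
      then show ?thesis ..
    qed
  qed
  then show ?thesis by auto
qed


definition IS :: "nat \<Rightarrow> nat list \<Rightarrow> nat set set" where
  "IS k xs = {I. I \<subseteq> {..<length xs} \<and> card I = k \<and> (\<forall>i \<in> I. \<forall>j \<in> I. i < j \<longrightarrow> xs ! i < xs ! j)}"

lemma tau_IS: "tau_perm k xs = card (IS k xs)"
  unfolding tau_perm_def IS_def ..

lemma finite_IS: "finite (IS k xs)"
proof -
  have "IS k xs \<subseteq> Pow {..<length xs}" unfolding IS_def by auto
  then show ?thesis by (rule finite_subset) simp
qed

definition delIdx :: "nat \<Rightarrow> 'a list \<Rightarrow> 'a list" where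
  "delIdx p xs = take p xs @ drop (Suc p) xs"

definition hsk :: "nat \<Rightarrow> nat \<Rightarrow> nat" where
  "hsk p j = (if j < p then j else Suc j)"

lemma length_delIdx: "p < length xs \<Longrightarrow> length (delIdx p xs) = length xs - 1"
  unfolding delIdx_def by simp

lemma nth_delIdx: "p < length xs \<Longrightarrow> j < length xs - 1 \<Longrightarrow> delIdx p xs ! j = xs ! hsk p j"
  unfolding delIdx_def hsk_def by (auto simp: nth_append min_def)

lemma hsk_less: "hsk p i < hsk p j \<longleftrightarrow> i < j"
  unfolding hsk_def by auto

lemma inj_hsk: "inj (hsk p)"
  unfolding inj_on_def hsk_def by auto

lemma hsk_ne: "hsk p j \<noteq> p"
  unfolding hsk_def by auto

lemma tau_del:
  assumes dist: "distinct xs" and p: "p < length xs" and k: "k \<ge> 1"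
    and chain: "\<forall>i j. i \<in> Cm \<longrightarrow> j \<in> Cm \<longrightarrow> i < j \<longrightarrow> xs ! i < xs ! j"
    and Cm: "Cm = {j. j < length xs \<and> ((j < p \<and> xs ! j < xs ! p) \<or> (p < j \<and> xs ! p < xs ! j))}"
  shows "tau_perm k xs = tau_perm k (delIdx p xs) + (card Cm choose (k - 1))"
proof -
  let ?L = "length xs"
  let ?d = "delIdx p xs"
  define A where "A = {I \<in> IS k xs. p \<notin> I}"
  define B where "B = {I \<in> IS k xs. p \<in> I}"
  have AB: "IS k xs = A \<union> B" "A \<inter> B = {}" unfolding A_def B_def by auto
  have fA: "finite A" "finite B" using finite_IS unfolding A_def B_def by auto
  have ld: "length ?d = ?L - 1" using p by (rule length_delIdx)
  have nd: "\<And>j. j < ?L - 1 \<Longrightarrow> ?d ! j = xs ! hsk p j" using p by (rule nth_delIdx)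
  have hL: "\<And>j. j < ?L - 1 \<Longrightarrow> hsk p j < ?L" unfolding hsk_def using p by auto
  have dx: "\<And>i j. i < ?L \<Longrightarrow> j < ?L \<Longrightarrow> xs ! i = xs ! j \<Longrightarrow> i = j"
    using dist nth_eq_iff_index_eq by blast
  have "A = image (hsk p) ` IS k ?d"
  proof (rule set_eqI, rule iffI)
    fix I assume "I \<in> A"
    then have I: "I \<subseteq> {..<?L}" "card I = k" "p \<notin> I" "\<forall>i \<in> I. \<forall>j \<in> I. i < j \<longrightarrow> xs ! i < xs ! j"
      unfolding A_def IS_def by auto
    define J where "J = {j. j < ?L - 1 \<and> hsk p j \<in> I}"
    have hJ: "hsk p ` J = I"
    proof (rule set_eqI, rule iffI)
      fix x assume "x \<in> hsk p ` J" then show "x \<in> I" unfolding J_def by auto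
    next
      fix x assume x: "x \<in> I"
      then have "x < ?L" "x \<noteq> p" using I by auto
      show "x \<in> hsk p ` J"
      proof (cases "x < p")
        case True
        then have "hsk p x = x" unfolding hsk_def by simp
        moreover have "x < ?L - 1" using True p by simp
        ultimately show ?thesis unfolding J_def using x by force
      next
        case False
        then have "hsk p (x - 1) = x" unfolding hsk_def using \<open>x \<noteq> p\<close> by auto
        moreover have "x - 1 < ?L - 1" using False \<open>x < ?L\<close> \<open>x \<noteq> p\<close> by auto
        ultimately show ?thesis unfolding J_def using x by (metis (mono_tags, lifting) image_eqI mem_Collect_eq)
      qed
    qed
    have "J \<in> IS k ?d"
      unfolding IS_def
    proof (intro CollectI conjI)
      show "J \<subseteq> {..<length ?d}" unfolding J_def ld by auto
      have "card (hsk p ` J) = card J" by (rule card_image) (rule inj_on_subset[OF inj_hsk], simp)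
      then have "card J = card (hsk p ` J)" by simp
      then show "card J = k" using hJ I by simp
      show "\<forall>i\<in>J. \<forall>j\<in>J. i < j \<longrightarrow> ?d ! i < ?d ! j"
        using I(4) nd hsk_less unfolding J_def by auto
    qed
    then show "I \<in> image (hsk p) ` IS k ?d" using hJ by blast
  next
    fix I assume "I \<in> image (hsk p) ` IS k ?d"
    then obtain J where J: "J \<in> IS k ?d" "I = hsk p ` J" by blast
    then have J': "J \<subseteq> {..<?L - 1}" "card J = k" "\<forall>i \<in> J. \<forall>j \<in> J. i < j \<longrightarrow> ?d ! i < ?d ! j"
      unfolding IS_def ld by auto
    have "I \<subseteq> {..<?L}" using J(2) J'(1) hL by auto
    moreover have "card (hsk p ` J) = card J" by (rule card_image) (rule inj_on_subset[OF inj_hsk], simp)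
    then have "card I = k" using J(2) J'(2) by simp
    moreover have "p \<notin> I" using J(2) hsk_ne[of p] by (metis imageE)
    moreover have "\<forall>i \<in> I. \<forall>j \<in> I. i < j \<longrightarrow> xs ! i < xs ! j"
    proof (intro ballI impI)
      fix i j assume "i \<in> I" "j \<in> I" "i < j"
      then obtain i' j' where "i' \<in> J" "j' \<in> J" "i = hsk p i'" "j = hsk p j'" using J(2) by blast
      then have ij: "i' < j'" using hsk_less \<open>i < j\<close> by simp
      have "i' < ?L - 1" "j' < ?L - 1" using J'(1) \<open>i' \<in> J\<close> \<open>j' \<in> J\<close> by auto
      moreover have "?d ! i' < ?d ! j'" using J'(3) \<open>i' \<in> J\<close> \<open>j' \<in> J\<close> ij by blast
      ultimately show "xs ! i < xs ! j" using nd \<open>i = hsk p i'\<close> \<open>j = hsk p j'\<close> by simp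
    qed
    ultimately show "I \<in> A" unfolding A_def IS_def by blast
  qed
  moreover have "inj_on (image (hsk p)) (IS k ?d)"
    using inj_hsk[of p] unfolding inj_on_def by (metis inj_image_eq_iff inj_hsk)
  ultimately have cA: "card A = tau_perm k ?d" unfolding tau_IS by (simp add: card_image)
  have pC: "p \<notin> Cm" unfolding Cm by auto
  have CmL: "Cm \<subseteq> {..<?L}" unfolding Cm by auto
  have "B = insert p ` {J. J \<subseteq> Cm \<and> card J = k - 1}"
  proof (rule set_eqI, rule iffI)
    fix I assume "I \<in> B"
    then have I: "I \<subseteq> {..<?L}" "card I = k" "p \<in> I" "\<forall>i \<in> I. \<forall>j \<in> I. i < j \<longrightarrow> xs ! i < xs ! j"
      unfolding B_def IS_def by auto
    have fI: "finite I" using I(1) finite_subset by blast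
    have "I - {p} \<subseteq> Cm"
    proof
      fix j assume j: "j \<in> I - {p}"
      then have "j < ?L" "j \<noteq> p" using I by auto
      then consider "j < p" | "p < j" by linarith
      then show "j \<in> Cm"
      proof cases
        case 1 then show ?thesis using I(3,4) j \<open>j < ?L\<close> unfolding Cm by auto
      next
        case 2 then show ?thesis using I(3,4) j \<open>j < ?L\<close> unfolding Cm by auto
      qed
    qed
    moreover have "card (I - {p}) = k - 1" using I(2,3) fI by simp
    moreover have "I = insert p (I - {p})" using I(3) by auto
    ultimately show "I \<in> insert p ` {J. J \<subseteq> Cm \<and> card J = k - 1}" by blast
  next
    fix I assume "I \<in> insert p ` {J. J \<subseteq> Cm \<and> card J = k - 1}"
    then obtain J where J: "J \<subseteq> Cm" "card J = k - 1" "I = insert p J" by blast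
    have fJ: "finite J" using J(1) CmL finite_subset by (metis finite_lessThan)
    have "p \<notin> J" using J(1) pC by auto
    have "I \<subseteq> {..<?L}" using J(1,3) CmL p by auto
    moreover have "card I = k" using J fJ \<open>p \<notin> J\<close> k by simp
    moreover have "\<forall>i \<in> I. \<forall>j \<in> I. i < j \<longrightarrow> xs ! i < xs ! j"
    proof (intro ballI impI)
      fix i j assume "i \<in> I" "j \<in> I" "i < j"
      then consider "i = p" "j \<in> J" | "j = p" "i \<in> J" | "i \<in> J" "j \<in> J" using J(3) by auto
      then show "xs ! i < xs ! j"
      proof cases
        case 1 then show ?thesis using J(1) \<open>i < j\<close> unfolding Cm by auto
      next
        case 2 then show ?thesis using J(1) \<open>i < j\<close> unfolding Cm by auto
      next
        case 3 then show ?thesis using J(1) chain \<open>i < j\<close> by blast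
      qed
    qed
    moreover have "p \<in> I" using J(3) by simp
    ultimately show "I \<in> B" unfolding B_def IS_def by blast
  qed
  moreover have "inj_on (insert p) {J. J \<subseteq> Cm \<and> card J = k - 1}"
  proof (rule inj_onI)
    fix x y assume "x \<in> {J. J \<subseteq> Cm \<and> card J = k - 1}" "y \<in> {J. J \<subseteq> Cm \<and> card J = k - 1}"
      "insert p x = insert p y"
    then have "p \<notin> x" "p \<notin> y" using pC by auto
    then show "x = y" using \<open>insert p x = insert p y\<close>
      by (metis Diff_insert_absorb)
  qed
  moreover have "finite Cm" using CmL finite_subset by blast
  ultimately have cB: "card B = card Cm choose (k - 1)"
    by (simp add: card_image n_subsets)
  show ?thesis unfolding tau_IS[of k xs] AB(1) using card_Un_disjoint[OF fA AB(2)] cA cB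
    by (simp add: tau_IS)
qed

lemma tau_map:
  assumes "\<forall>a \<in> set xs. \<forall>b \<in> set xs. g a < g b \<longleftrightarrow> a < b"
  shows "tau_perm k (map g xs) = tau_perm k xs"
proof -
  have "\<forall>i<length xs. \<forall>j<length xs. (g (xs ! i) < g (xs ! j)) = (xs ! i < xs ! j)"
    using assms by simp
  then have "\<And>I. I \<subseteq> {..<length xs} \<Longrightarrow> (\<forall>i\<in>I. \<forall>j\<in>I. i < j \<longrightarrow> map g xs ! i < map g xs ! j)
     = (\<forall>i\<in>I. \<forall>j\<in>I. i < j \<longrightarrow> xs ! i < xs ! j)"
    by (smt (verit, best) lessThan_iff nth_map subsetD)
  then have "IS k (map g xs) = IS k xs" unfolding IS_def by auto
  then show ?thesis by (simp add: tau_IS)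
qed


definition shift :: "nat \<Rightarrow> nat \<Rightarrow> nat" where
  "shift q v = (if q \<le> v then Suc v else v)"

definition unshift :: "nat \<Rightarrow> nat \<Rightarrow> nat" where
  "unshift x v = (if x < v then v - 1 else v)"

definition insAt :: "nat \<Rightarrow> nat \<Rightarrow> nat list \<Rightarrow> nat list" where
  "insAt p q s = take p (map (shift q) s) @ q # drop p (map (shift q) s)"

definition delAt :: "nat \<Rightarrow> nat list \<Rightarrow> nat list" where
  "delAt p t = map (unshift (t ! p)) (delIdx p t)"

lemma shift_less: "shift q a < shift q b \<longleftrightarrow> a < b"
  unfolding shift_def by auto

lemma shift_ne: "shift q a \<noteq> q"
  unfolding shift_def by auto

lemma unshift_shift: "unshift q (shift q v) = v"
  unfolding shift_def unshift_def by auto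

lemma shift_unshift: "v \<noteq> x \<Longrightarrow> shift x (unshift x v) = v"
  unfolding shift_def unshift_def by auto

lemma unshift_less: "a \<noteq> x \<Longrightarrow> b \<noteq> x \<Longrightarrow> unshift x a < unshift x b \<longleftrightarrow> a < b"
  unfolding unshift_def by auto

lemma inj_shift: "inj (shift q)"
  unfolding inj_on_def shift_def by auto

lemma inj_unshift: "inj_on (unshift x) (- {x})"
  unfolding inj_on_def unshift_def by auto

lemma length_insAt: "p \<le> length s \<Longrightarrow> length (insAt p q s) = Suc (length s)"
  unfolding insAt_def by simp

lemma nth_insAt:
  assumes "p \<le> length s" "j \<le> length s"
  shows "insAt p q s ! j = (if j < p then shift q (s ! j) else if j = p then q else shift q (s ! (j - 1)))"
proof -
  have l: "length (take p (map (shift q) s)) = p" using assms(1) by simp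
  consider "j < p" | "j = p" | "p < j" by linarith
  then show ?thesis
  proof cases
    case 1 then show ?thesis unfolding insAt_def using l assms by (simp add: nth_append)
  next
    case 2 then show ?thesis unfolding insAt_def using l assms by (simp add: nth_append)
  next
    case 3
    then have "insAt p q s ! j = (q # drop p (map (shift q) s)) ! (j - p)"
      unfolding insAt_def using l by (simp add: nth_append)
    also have "\<dots> = drop p (map (shift q) s) ! (j - p - 1)" using 3 by (simp add: nth_Cons')
    also have "\<dots> = shift q (s ! (j - 1))" using 3 assms by simp
    finally show ?thesis using 3 by simp
  qed
qed

lemma nth_insAt_hsk:
  assumes "p \<le> length s" "j < length s"
  shows "insAt p q s ! hsk p j = shift q (s ! j)"
  using assms nth_insAt[of p s "hsk p j" q] unfolding hsk_def by auto

lemma insAt_p: "p \<le> length s \<Longrightarrow> insAt p q s ! p = q"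
  using nth_insAt[of p s p q] by simp

lemma delIdx_insAt: "p \<le> length s \<Longrightarrow> delIdx p (insAt p q s) = map (shift q) s"
  unfolding insAt_def delIdx_def by simp

lemma delAt_insAt: "p \<le> length s \<Longrightarrow> delAt p (insAt p q s) = s"
  unfolding delAt_def by (simp add: insAt_p delIdx_insAt unshift_shift comp_def)

lemma length_delAt: "p < length t \<Longrightarrow> length (delAt p t) = length t - 1"
  unfolding delAt_def by (simp add: length_delIdx)

lemma nth_delAt: "p < length t \<Longrightarrow> j < length t - 1 \<Longrightarrow> delAt p t ! j = unshift (t ! p) (t ! hsk p j)"
  unfolding delAt_def by (simp add: nth_delIdx length_delIdx)

lemma insAt_delAt:
  assumes "distinct t" "p < length t"
  shows "insAt p (t ! p) (delAt p t) = t"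
proof (rule nth_equalityI)
  have ld: "length (delAt p t) = length t - 1" using assms(2) by (rule length_delAt)
  have pl: "p \<le> length (delAt p t)" using ld assms(2) by simp
  show "length (insAt p (t ! p) (delAt p t)) = length t"
    using length_insAt[OF pl] ld assms(2) by simp
  fix j assume "j < length (insAt p (t ! p) (delAt p t))"
  then have j: "j < length t" using length_insAt[OF pl] ld assms(2) by simp
  have dx: "\<And>i. i < length t \<Longrightarrow> i \<noteq> p \<Longrightarrow> t ! i \<noteq> t ! p"
    using assms nth_eq_iff_index_eq by blast
  show "insAt p (t ! p) (delAt p t) ! j = t ! j"
  proof (cases "j < p")
    case True
    then have "hsk p j = j" unfolding hsk_def by simp
    then show ?thesis using True j nth_insAt[OF pl, of j] ld assms(2) nth_delAt[OF assms(2), of j]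
      shift_unshift dx by auto
  next
    case False
    show ?thesis
    proof (cases "j = p")
      case True then show ?thesis using insAt_p[OF pl] by simp
    next
      case False
      then have jp: "p < j" using \<open>\<not> j < p\<close> by simp
      then have "hsk p (j - 1) = j" unfolding hsk_def by auto
      then show ?thesis using jp j nth_insAt[OF pl, of j] ld assms(2) nth_delAt[OF assms(2), of "j - 1"]
        shift_unshift dx by auto
    qed
  qed
qed

lemma set_distinct_ins:
  assumes "distinct xs" "q \<notin> set xs"
  shows "distinct (take p xs @ q # drop p xs) \<and> set (take p xs @ q # drop p xs) = insert q (set xs)"
proof -
  have e: "xs = take p xs @ drop p xs" by simp
  have "distinct (take p xs @ drop p xs)" using assms(1) by simp
  then have "distinct (take p xs)" "distinct (drop p xs)" "set (take p xs) \<inter> set (drop p xs) = {}"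
    by (auto simp only: distinct_append)
  moreover have "q \<notin> set (take p xs)" "q \<notin> set (drop p xs)" using assms(2) e
    by (metis Un_iff set_append)+
  moreover have "set (take p xs) \<union> set (drop p xs) = set xs" using e by (metis set_append)
  ultimately show ?thesis by auto
qed

lemma perms_insAt:
  assumes "s \<in> perms m" "1 \<le> q" "q \<le> Suc m" "p \<le> m"
  shows "insAt p q s \<in> perms (Suc m)"
proof -
  have s: "distinct s" "set s = {1..m}" using assms(1) unfolding perms_def by auto
  have d: "distinct (map (shift q) s)" using s(1) inj_on_subset[OF inj_shift[of q], of "set s"]
    by (simp add: distinct_map)
  have n: "q \<notin> set (map (shift q) s)" using shift_ne[of q] by (metis imageE set_map)
  have st: "shift q ` {1..m} = {1..Suc m} - {q}"
  proof (rule set_eqI, rule iffI)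
    fix x assume "x \<in> shift q ` {1..m}" then show "x \<in> {1..Suc m} - {q}"
      using shift_ne unfolding shift_def by auto
  next
    fix x assume x: "x \<in> {1..Suc m} - {q}"
    show "x \<in> shift q ` {1..m}"
    proof (cases "x < q")
      case True
      then have "shift q x = x" unfolding shift_def by simp
      moreover have "x \<in> {1..m}" using x True assms(3) by auto
      ultimately show ?thesis by (metis imageI)
    next
      case False
      then have "shift q (x - 1) = x" using x assms(2) unfolding shift_def by auto
      moreover have "x - 1 \<in> {1..m}" using x False assms(2) by auto
      ultimately show ?thesis by (metis imageI)
    qed
  qed
  have "set (insAt p q s) = {1..Suc m}"
    using set_distinct_ins[OF d n, of p] s(2) st assms(2,3) unfolding insAt_def by auto
  moreover have "distinct (insAt p q s)" using set_distinct_ins[OF d n, of p] unfolding insAt_def by simp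
  ultimately show ?thesis unfolding perms_def by simp
qed

lemma length_perms: "t \<in> perms m \<Longrightarrow> length t = m"
  unfolding perms_def using distinct_card by fastforce

lemma delIdx_set_distinct:
  assumes "distinct t" "p < length t"
  shows "distinct (delIdx p t) \<and> set (delIdx p t) = set t - {t ! p}"
proof -
  have e: "t = take p t @ t ! p # drop (Suc p) t" using assms(2) by (simp add: id_take_nth_drop)
  have "distinct (take p t @ t ! p # drop (Suc p) t)" using assms(1) e by simp
  then have a: "distinct (take p t)" "distinct (drop (Suc p) t)" "set (take p t) \<inter> set (drop (Suc p) t) = {}"
     "t ! p \<notin> set (take p t)" "t ! p \<notin> set (drop (Suc p) t)"
    by auto
  have "set t = set (take p t) \<union> insert (t ! p) (set (drop (Suc p) t))" using e by (metis set_append list.set(2))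
  then show ?thesis using a unfolding delIdx_def by auto
qed

lemma perms_delAt:
  assumes "t \<in> perms (Suc m)" "p < Suc m"
  shows "delAt p t \<in> perms m"
proof -
  have t: "distinct t" "set t = {1..Suc m}" using assms(1) unfolding perms_def by auto
  have lt: "length t = Suc m" using assms(1) by (rule length_perms)
  have pl: "p < length t" using lt assms(2) by simp
  let ?x = "t ! p"
  have x: "?x \<in> {1..Suc m}" using t(2) pl nth_mem by blast
  obtain dd: "distinct (delIdx p t)" and sd: "set (delIdx p t) = {1..Suc m} - {?x}"
    using delIdx_set_distinct[OF t(1) pl] t(2) by auto
  have "inj_on (unshift ?x) ({1..Suc m} - {?x})"
    using inj_unshift by (rule inj_on_subset) auto
  then have "distinct (delAt p t)" unfolding delAt_def using dd sd by (simp add: distinct_map inj_on_subset)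
  moreover have "unshift ?x ` ({1..Suc m} - {?x}) = {1..m}"
  proof (rule set_eqI, rule iffI)
    fix v assume "v \<in> unshift ?x ` ({1..Suc m} - {?x})"
    then show "v \<in> {1..m}" using x unfolding unshift_def by auto
  next
    fix v assume v: "v \<in> {1..m}"
    show "v \<in> unshift ?x ` ({1..Suc m} - {?x})"
    proof (cases "v < ?x")
      case True
      then have "unshift ?x v = v" unfolding unshift_def by simp
      moreover have "v \<in> {1..Suc m} - {?x}" using v True by auto
      ultimately show ?thesis by (metis imageI)
    next
      case False
      then have "unshift ?x (Suc v) = v" unfolding unshift_def by auto
      moreover have "Suc v \<in> {1..Suc m} - {?x}" using v False by auto
      ultimately show ?thesis by (metis imageI)
    qed
  qed
  then have "set (delAt p t) = {1..m}" unfolding delAt_def using sd by simp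
  ultimately show ?thesis unfolding perms_def by simp
qed

definition remv :: "nat \<Rightarrow> nat list \<Rightarrow> bool" where
  "remv p t \<longleftrightarrow> (\<forall>j1 j2. p < j1 \<longrightarrow> j1 < j2 \<longrightarrow> j2 < length t \<longrightarrow> t ! p < t ! j1 \<longrightarrow> t ! p < t ! j2
      \<longrightarrow> t ! j1 < t ! j2)"

lemma avC_delAt:
  assumes "avC t" "distinct t" "p < length t"
  shows "avC (delAt p t)"
  unfolding avC_def
proof
  assume "\<exists>a b c d. a < b \<and> b < c \<and> c < d \<and> d < length (delAt p t) \<and>
        delAt p t ! a < delAt p t ! d \<and> delAt p t ! b < delAt p t ! d \<and> delAt p t ! d < delAt p t ! c"
  then obtain a b c d where h: "a < b" "b < c" "c < d" "d < length (delAt p t)"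
     "delAt p t ! a < delAt p t ! d" "delAt p t ! b < delAt p t ! d" "delAt p t ! d < delAt p t ! c" by blast
  have ld: "length (delAt p t) = length t - 1" using assms(3) by (rule length_delAt)
  have nd: "\<And>j. j < length t - 1 \<Longrightarrow> delAt p t ! j = unshift (t ! p) (t ! hsk p j)"
    using assms(3) by (rule nth_delAt)
  have hl: "\<And>j. j < length t - 1 \<Longrightarrow> hsk p j < length t" unfolding hsk_def using assms(3) by auto
  have ne: "\<And>j. j < length t - 1 \<Longrightarrow> t ! hsk p j \<noteq> t ! p"
    using assms(2,3) hsk_ne hl nth_eq_iff_index_eq by metis
  have lt: "\<And>i j. i < length t - 1 \<Longrightarrow> j < length t - 1 \<Longrightarrow> delAt p t ! i < delAt p t ! j \<longleftrightarrow> t ! hsk p i < t ! hsk p j"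
    using nd ne unshift_less by simp
  have "a < length t - 1" "b < length t - 1" "c < length t - 1" "d < length t - 1" using h ld by auto
  then have "t ! hsk p a < t ! hsk p d" "t ! hsk p b < t ! hsk p d" "t ! hsk p d < t ! hsk p c"
    using h(5,6,7) lt by auto
  moreover have "hsk p a < hsk p b" "hsk p b < hsk p c" "hsk p c < hsk p d" "hsk p d < length t"
    using h hsk_less hl \<open>d < length t - 1\<close> by auto
  ultimately show False using assms(1) unfolding avC_def by blast
qed

lemma avC_insAt:
  assumes "avC s" "p \<le> 1" "p \<le> length s" "remv p (insAt p q s)"
  shows "avC (insAt p q s)"
  unfolding avC_def
proof
  let ?t = "insAt p q s"
  assume "\<exists>a b c d. a < b \<and> b < c \<and> c < d \<and> d < length ?t \<and>
        ?t ! a < ?t ! d \<and> ?t ! b < ?t ! d \<and> ?t ! d < ?t ! c"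
  then obtain a b c d where h: "a < b" "b < c" "c < d" "d < length ?t"
     "?t ! a < ?t ! d" "?t ! b < ?t ! d" "?t ! d < ?t ! c" by blast
  have lt: "length ?t = Suc (length s)" using assms(3) by (rule length_insAt)
  consider "p = a" | "p = b" | "p \<noteq> a" "p \<noteq> b" by blast
  then show False
  proof cases
    case 1
    have "?t ! c < ?t ! d"
      by (rule assms(4)[unfolded remv_def, rule_format]) (use h 1 in auto)
    then show False using h by simp
  next
    case 2
    have "?t ! c < ?t ! d"
      by (rule assms(4)[unfolded remv_def, rule_format]) (use h 2 in auto)
    then show False using h by simp
  next
    case 3
    have pc: "p < c" "p < d" using assms(2) h(1,2,3) by auto
    define g where "g j = (if j < p then j else j - 1)" for j
    have gh: "\<And>j. j \<noteq> p \<Longrightarrow> hsk p (g j) = j" unfolding g_def hsk_def by auto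
    have gl: "\<And>j. j \<noteq> p \<Longrightarrow> j < length ?t \<Longrightarrow> g j < length s" unfolding g_def using lt assms(3) by auto
    have tv: "\<And>j. j \<noteq> p \<Longrightarrow> j < length ?t \<Longrightarrow> ?t ! j = shift q (s ! g j)"
      using nth_insAt_hsk[OF assms(3)] gh gl by metis
    have gm: "\<And>i j. i \<noteq> p \<Longrightarrow> j \<noteq> p \<Longrightarrow> i < j \<Longrightarrow> g i < g j"
      by (metis gh hsk_less)
    have ne: "a \<noteq> p" "b \<noteq> p" "c \<noteq> p" "d \<noteq> p" using 3 pc by auto
    have ls: "a < length ?t" "b < length ?t" "c < length ?t" using h by auto
    have "s ! g a < s ! g d" "s ! g b < s ! g d" "s ! g d < s ! g c"
      using h(5,6,7) tv ne ls h(4) shift_less by auto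
    moreover have "g a < g b" "g b < g c" "g c < g d" "g d < length s"
      using gm ne h gl by auto
    ultimately show False using assms(1) unfolding avC_def by blast
  qed
qed

lemma tau_insAt:
  assumes dt: "distinct (insAt p q s)" and p: "p \<le> 1" "p \<le> length s" and r: "remv p (insAt p q s)"
    and k: "k \<ge> 1"
  shows "tau_perm k (insAt p q s) = tau_perm k s +
    (card {j. j < length (insAt p q s) \<and> ((j < p \<and> insAt p q s ! j < insAt p q s ! p) \<or>
            (p < j \<and> insAt p q s ! p < insAt p q s ! j))} choose (k - 1))"
proof -
  let ?t = "insAt p q s"
  let ?C = "{j. j < length ?t \<and> ((j < p \<and> ?t ! j < ?t ! p) \<or> (p < j \<and> ?t ! p < ?t ! j))}"
  have lt: "length ?t = Suc (length s)" using p(2) by (rule length_insAt)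
  have pl: "p < length ?t" using lt p by simp
  have chain: "\<forall>i j. i \<in> ?C \<longrightarrow> j \<in> ?C \<longrightarrow> i < j \<longrightarrow> ?t ! i < ?t ! j"
  proof (intro allI impI)
    fix i j assume i: "i \<in> ?C" and j: "j \<in> ?C" and ij: "i < j"
    show "?t ! i < ?t ! j"
    proof (cases "i < p")
      case True
      then have "p < j" using j ij p(1) by auto
      then show ?thesis using i j True by auto
    next
      case False
      then have "p < i" using i by auto
      then show ?thesis using i j ij r unfolding remv_def by auto
    qed
  qed
  have "tau_perm k ?t = tau_perm k (delIdx p ?t) + (card ?C choose (k - 1))"
    by (rule tau_del[OF dt pl k chain refl])
  moreover have "delIdx p ?t = map (shift q) s" using p(2) by (rule delIdx_insAt)
  moreover have "tau_perm k (map (shift q) s) = tau_perm k s"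
    by (rule tau_map) (simp add: shift_less)
  ultimately show ?thesis by simp
qed

lemma card_vals:
  assumes "t \<in> perms L"
  shows "card {j. j < L \<and> P (t ! j)} = card {v. v \<in> {1..L} \<and> P v}"
proof -
  have t: "distinct t" "set t = {1..L}" "length t = L" using assms length_perms unfolding perms_def by auto
  have "inj_on (nth t) {j. j < L \<and> P (t ! j)}"
    unfolding inj_on_def using t nth_eq_iff_index_eq by auto
  moreover have "nth t ` {j. j < L \<and> P (t ! j)} = {v. v \<in> {1..L} \<and> P v}"
  proof (rule set_eqI, rule iffI)
    fix v assume "v \<in> nth t ` {j. j < L \<and> P (t ! j)}"
    then show "v \<in> {v. v \<in> {1..L} \<and> P v}" using t nth_mem by auto
  next
    fix v assume "v \<in> {v. v \<in> {1..L} \<and> P v}"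
    then have "v \<in> set t" "P v" using t by auto
    then obtain j where "j < L" "t ! j = v" using t(3) by (metis in_set_conv_nth)
    then show "v \<in> nth t ` {j. j < L \<and> P (t ! j)}" using \<open>P v\<close> by auto
  qed
  ultimately show ?thesis by (metis card_image)
qed

lemma card_above: "card {v. v \<in> {1..L} \<and> q < v} = L - (q::nat)"
proof -
  have "{v. v \<in> {1..L} \<and> q < v} = {Suc q..L}" by auto
  then show ?thesis by simp
qed


definition Cset :: "nat \<Rightarrow> nat list set" where
  "Cset m = {t \<in> perms m. avC t}"

lemma Cset_avoiders: "avoiders m {[1,2,4,3], [2,1,4,3]} = Cset m"
  unfolding avoiders_def Cset_def using avC_iff unfolding perms_def by auto

lemma Cset_D:
  assumes "t \<in> Cset m"
  shows "distinct t" "set t = {1..m}" "length t = m" "avC t" "t \<in> perms m"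
  using assms length_perms unfolding Cset_def perms_def by auto

lemma shift_gt: "q < shift q v \<longleftrightarrow> q \<le> v"
  unfolding shift_def by auto

lemma shift_small: "v < q \<Longrightarrow> shift q v = v"
  unfolding shift_def by auto

lemma shift_lt: "shift q v < q \<longleftrightarrow> v < q"
  unfolding shift_def by auto

lemma shift_ge: "v \<le> shift q v"
  unfolding shift_def by auto

lemma ins0_0: "insAt 0 q s ! 0 = q"
  unfolding insAt_def by simp

lemma ins0_Suc: "j < length s \<Longrightarrow> insAt 0 q s ! Suc j = shift q (s ! j)"
  using nth_insAt[of 0 s "Suc j" q] by simp

lemma ins1_0: "1 \<le> length s \<Longrightarrow> insAt 1 q s ! 0 = shift q (s ! 0)"
  using nth_insAt[of 1 s 0 q] by simp

lemma ins1_1: "1 \<le> length s \<Longrightarrow> insAt 1 q s ! 1 = q"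
  using nth_insAt[of 1 s 1 q] by simp

lemma ins1_Suc: "1 \<le> j \<Longrightarrow> j < length s \<Longrightarrow> insAt 1 q s ! Suc j = shift q (s ! j)"
  using nth_insAt[of 1 s "Suc j" q] by simp

lemma ins1_1': "1 \<le> length s \<Longrightarrow> insAt (Suc 0) q s ! Suc 0 = q"
  using ins1_1 by simp

lemma ins1_Suc': "1 \<le> j \<Longrightarrow> j < length s \<Longrightarrow> insAt (Suc 0) q s ! Suc j = shift q (s ! j)"
  using ins1_Suc by simp

lemma ins1_0': "1 \<le> length s \<Longrightarrow> insAt (Suc 0) q s ! 0 = shift q (s ! 0)"
  using ins1_0 by simp

lemma remv_ins0:
  "remv 0 (insAt 0 q s) \<longleftrightarrow> (\<forall>a b. a < b \<longrightarrow> b < length s \<longrightarrow> q \<le> s ! a \<longrightarrow> q \<le> s ! b \<longrightarrow> s ! a < s ! b)"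
proof
  assume r: "remv 0 (insAt 0 q s)"
  show "\<forall>a b. a < b \<longrightarrow> b < length s \<longrightarrow> q \<le> s ! a \<longrightarrow> q \<le> s ! b \<longrightarrow> s ! a < s ! b"
  proof (intro allI impI)
    fix a b assume h: "a < b" "b < length s" "q \<le> s ! a" "q \<le> s ! b"
    have "insAt 0 q s ! Suc a < insAt 0 q s ! Suc b"
      by (rule r[unfolded remv_def, rule_format])
        (use h in \<open>auto simp: length_insAt ins0_0 ins0_Suc shift_gt\<close>)
    then show "s ! a < s ! b" using h by (simp add: ins0_Suc shift_less)
  qed
next
  assume r: "\<forall>a b. a < b \<longrightarrow> b < length s \<longrightarrow> q \<le> s ! a \<longrightarrow> q \<le> s ! b \<longrightarrow> s ! a < s ! b"
  show "remv 0 (insAt 0 q s)"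
    unfolding remv_def
  proof (intro allI impI)
    fix j1 j2 assume h: "0 < j1" "j1 < j2" "j2 < length (insAt 0 q s)"
      "insAt 0 q s ! 0 < insAt 0 q s ! j1" "insAt 0 q s ! 0 < insAt 0 q s ! j2"
    obtain a b where ab: "j1 = Suc a" "j2 = Suc b" using h(1,2) by (metis gr0_conv_Suc less_trans)
    have l: "a < b" "b < length s" using h ab by (auto simp: length_insAt)
    then have "q \<le> s ! a" "q \<le> s ! b" using h(4,5) ab by (auto simp: ins0_0 ins0_Suc shift_gt)
    then have "s ! a < s ! b" using r l by blast
    then show "insAt 0 q s ! j1 < insAt 0 q s ! j2" using ab l by (simp add: ins0_Suc shift_less)
  qed
qed

lemma remv_ins1:
  assumes "1 \<le> length s"
  shows "remv 1 (insAt 1 q s) \<longleftrightarrow> (\<forall>a b. 1 \<le> a \<longrightarrow> a < b \<longrightarrow> b < length s \<longrightarrow> q \<le> s ! a \<longrightarrow> q \<le> s ! b \<longrightarrow> s ! a < s ! b)"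
proof
  assume r: "remv 1 (insAt 1 q s)"
  show "\<forall>a b. 1 \<le> a \<longrightarrow> a < b \<longrightarrow> b < length s \<longrightarrow> q \<le> s ! a \<longrightarrow> q \<le> s ! b \<longrightarrow> s ! a < s ! b"
  proof (intro allI impI)
    fix a b assume h: "1 \<le> a" "a < b" "b < length s" "q \<le> s ! a" "q \<le> s ! b"
    have "insAt 1 q s ! Suc a < insAt 1 q s ! Suc b"
      by (rule r[unfolded remv_def, rule_format])
        (use h assms in \<open>auto simp: length_insAt ins1_1 ins1_Suc ins1_1' ins1_Suc' shift_gt\<close>)
    then show "s ! a < s ! b" using h by (simp add: ins1_Suc ins1_Suc' shift_less)
  qed
next
  assume r: "\<forall>a b. 1 \<le> a \<longrightarrow> a < b \<longrightarrow> b < length s \<longrightarrow> q \<le> s ! a \<longrightarrow> q \<le> s ! b \<longrightarrow> s ! a < s ! b"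
  show "remv 1 (insAt 1 q s)"
    unfolding remv_def
  proof (intro allI impI)
    fix j1 j2 assume h: "1 < j1" "j1 < j2" "j2 < length (insAt 1 q s)"
      "insAt 1 q s ! 1 < insAt 1 q s ! j1" "insAt 1 q s ! 1 < insAt 1 q s ! j2"
    obtain a b where ab: "j1 = Suc a" "j2 = Suc b" using h(1,2) by (metis gr0_conv_Suc less_trans zero_less_one)
    have l: "1 \<le> a" "a < b" "b < length s" using h ab assms by (auto simp: length_insAt)
    then have "q \<le> s ! a" "q \<le> s ! b" using h(4,5) ab assms by (auto simp: ins1_1 ins1_Suc ins1_1' ins1_Suc' shift_gt)
    then have "s ! a < s ! b" using r l by blast
    then show "insAt 1 q s ! j1 < insAt 1 q s ! j2" using ab l by (simp add: ins1_Suc ins1_Suc' shift_less)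
  qed
qed

lemma not_remv0:
  assumes t: "t \<in> Cset m" and nr: "\<not> remv 0 t"
  shows "2 \<le> m" "remv 1 t" "t ! 0 < t ! 1" "\<exists>j. 2 \<le> j \<and> j < m \<and> t ! j = t ! 1 - 1" "t ! 0 < t ! 1 - 1"
proof -
  note T = Cset_D[OF t]
  have dst: "\<And>i j. i < m \<Longrightarrow> j < m \<Longrightarrow> i \<noteq> j \<Longrightarrow> t ! i \<noteq> t ! j"
    using T(1,3) nth_eq_iff_index_eq by blast
  have av: "\<And>a b c d. a < b \<Longrightarrow> b < c \<Longrightarrow> c < d \<Longrightarrow> d < m \<Longrightarrow> t ! a < t ! d \<Longrightarrow> t ! b < t ! d
      \<Longrightarrow> t ! d < t ! c \<Longrightarrow> False"
    using T(3,4) unfolding avC_def by blast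
  obtain j1 j2 where j: "0 < j1" "j1 < j2" "j2 < m" "t ! 0 < t ! j1" "t ! 0 < t ! j2" "\<not> t ! j1 < t ! j2"
    using nr T(3) unfolding remv_def by blast
  have j21: "t ! j2 < t ! j1" using j(6) dst[of j1 j2] j(2,3) by linarith
  show m2: "2 \<le> m" using j by linarith
  obtain jc where jc: "2 \<le> jc" "jc < m" "t ! 0 < t ! jc" "t ! jc < t ! 1"
  proof (cases "j1 = 1")
    case True
    then show ?thesis using that[of j2] j j21 by auto
  next
    case False
    then have "2 \<le> j1" using j(1) by linarith
    have "\<not> t ! 1 < t ! j2"
    proof
      assume "t ! 1 < t ! j2"
      then show False using av[of 0 1 j1 j2] j j21 \<open>2 \<le> j1\<close> by linarith
    qed
    then have "t ! j2 < t ! 1" using dst[of 1 j2] j \<open>2 \<le> j1\<close> by linarith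
    then show ?thesis using that[of j2] j \<open>2 \<le> j1\<close> by auto
  qed
  show lt: "t ! 0 < t ! 1" using jc by linarith
  show "remv 1 t"
    unfolding remv_def
  proof (intro allI impI)
    fix k1 k2 assume k: "1 < k1" "k1 < k2" "k2 < length t" "t ! 1 < t ! k1" "t ! 1 < t ! k2"
    show "t ! k1 < t ! k2"
    proof (rule ccontr)
      assume "\<not> t ! k1 < t ! k2"
      then have k21: "t ! k2 < t ! k1" using dst[of k1 k2] k T(3) by linarith
      show False
      proof (cases "t ! 0 < t ! k2")
        case True
        then show False using av[of 0 1 k1 k2] k k21 T(3) by linarith
      next
        case False
        then have "t ! k2 < t ! 0" using dst[of 0 k2] k T(3) by linarith
        then show False using k lt by linarith
      qed
    qed
  qed
  have v1: "t ! jc \<in> {1..m}" using T(2,3) jc(2) nth_mem by blast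
  have v2: "t ! 1 \<in> {1..m}" using T(2,3) m2 nth_mem by (metis Suc_1 Suc_le_lessD)
  have "1 \<le> t ! jc" "t ! 1 \<le> m" using v1 v2 by auto
  then have "t ! 1 - 1 \<in> {1..m}" using jc by auto
  then obtain j where jj: "j < m" "t ! j = t ! 1 - 1" using T(2,3) by (metis in_set_conv_nth)
  have "j \<noteq> 0"
  proof
    assume "j = 0" with jj have "t ! 0 = t ! 1 - 1" by simp
    with jc show False by linarith
  qed
  moreover have "j \<noteq> 1"
  proof
    assume "j = 1" with jj have "t ! 1 = t ! 1 - 1" by simp
    with jc \<open>1 \<le> t ! jc\<close> show False by linarith
  qed
  ultimately show "\<exists>j. 2 \<le> j \<and> j < m \<and> t ! j = t ! 1 - 1" using jj by (intro exI[of _ j]) auto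
  show "t ! 0 < t ! 1 - 1" using jc by linarith
qed

definition labC :: "nat list \<Rightarrow> nat" where
  "labC t = (if remv 0 t then length t - t ! 0 else Suc (length t) - t ! 1)"

definition chC :: "nat list \<Rightarrow> bool \<times> nat \<Rightarrow> nat list" where
  "chC s c = (if fst c then insAt 0 (Suc (length s) - snd c) s
     else if snd c = Suc (labC s) \<and> remv 0 s then insAt 0 (s ! 0) s
     else insAt 1 (length s + 2 - snd c) s)"

definition choices :: "nat \<Rightarrow> (bool \<times> nat) set" where
  "choices t = {(True, i) | i. i \<le> t} \<union> {(False, i) | i. 1 \<le> i \<and> i \<le> Suc t}"

definition parC :: "nat list \<Rightarrow> nat list" where
  "parC t = (if remv 0 t then delAt 0 t else delAt 1 t)"

definition choC :: "nat list \<Rightarrow> bool \<times> nat" where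
  "choC t = (remv 0 t \<and> labC t \<le> labC (parC t), labC t)"

lemma child_gen:
  assumes s: "s \<in> Cset m" and m: "1 \<le> m" and p: "p \<le> 1" and q: "1 \<le> q" "q \<le> Suc m"
    and r: "remv p (insAt p q s)" and p1: "p = 1 \<Longrightarrow> s ! 0 < q"
  shows "insAt p q s \<in> Cset (Suc m)"
    "\<And>k. k \<ge> 1 \<Longrightarrow> tau_perm k (insAt p q s) = tau_perm k s + ((Suc m - q + p) choose (k - 1))"
    "delAt p (insAt p q s) = s"
proof -
  note S = Cset_D[OF s]
  have pm: "p \<le> length s" using p m S(3) by simp
  have tp: "insAt p q s \<in> perms (Suc m)" using perms_insAt[OF S(5) q] p m by simp
  then show "insAt p q s \<in> Cset (Suc m)" unfolding Cset_def using avC_insAt[OF S(4) p pm r] by simp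
  show "delAt p (insAt p q s) = s" using pm by (rule delAt_insAt)
  let ?t = "insAt p q s"
  have lt: "length ?t = Suc m" using tp by (rule length_perms)
  have dt: "distinct ?t" using tp unfolding perms_def by simp
  have tpq: "?t ! p = q" using pm by (rule insAt_p)
  let ?C = "{j. j < length ?t \<and> ((j < p \<and> ?t ! j < ?t ! p) \<or> (p < j \<and> ?t ! p < ?t ! j))}"
  have cv: "card {j. j < Suc m \<and> q < ?t ! j} = Suc m - q"
    using card_vals[OF tp, of "\<lambda>v. q < v"] card_above by simp
  have "card ?C = Suc m - q + p"
  proof (cases "p = 0")
    case True
    have "?C = {j. j < Suc m \<and> q < ?t ! j}"
    proof (rule set_eqI)
      fix j
      show "j \<in> ?C \<longleftrightarrow> j \<in> {j. j < Suc m \<and> q < ?t ! j}"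
        using lt tpq True by (cases j) auto
    qed
    then show ?thesis using cv True by simp
  next
    case False
    then have p1': "p = 1" using p by simp
    have t0: "?t ! 0 < q" using p1' p1 S(3) m ins1_0 shift_small by simp
    have "?C = insert 0 {j. j < Suc m \<and> q < ?t ! j}"
    proof (rule set_eqI)
      fix j
      show "j \<in> ?C \<longleftrightarrow> j \<in> insert 0 {j. j < Suc m \<and> q < ?t ! j}"
        using lt tpq t0 p1' by (cases j; cases "j = 1") auto
    qed
    moreover have "0 \<notin> {j. j < Suc m \<and> q < ?t ! j}" using t0 by simp
    ultimately show ?thesis using cv p1' by simp
  qed
  then show "\<And>k. k \<ge> 1 \<Longrightarrow> tau_perm k ?t = tau_perm k s + ((Suc m - q + p) choose (k - 1))"
    using tau_insAt[OF dt p pm r] by simp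
qed


lemma ch0_facts:
  assumes s: "s \<in> Cset m" and m: "1 \<le> m" and q: "1 \<le> q" "q \<le> Suc m"
    and r: "remv 0 (insAt 0 q s)"
  shows "insAt 0 q s \<in> Cset (Suc m)" "labC (insAt 0 q s) = Suc m - q"
    "\<And>k. k \<ge> 1 \<Longrightarrow> tau_perm k (insAt 0 q s) = tau_perm k s + ((Suc m - q) choose (k - 1))"
    "parC (insAt 0 q s) = s" "choC (insAt 0 q s) = (Suc m - q \<le> labC s, Suc m - q)"
proof -
  have p0: "(0::nat) \<le> 1" "(0::nat) = 1 \<Longrightarrow> s ! 0 < q" by auto
  note G = child_gen[OF s m p0(1) q r p0(2)]
  show "insAt 0 q s \<in> Cset (Suc m)" by (rule G(1))
  show "\<And>k. k \<ge> 1 \<Longrightarrow> tau_perm k (insAt 0 q s) = tau_perm k s + ((Suc m - q) choose (k - 1))"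
    using G(2) by simp
  have l: "length (insAt 0 q s) = Suc m" using G(1) Cset_D(3) by blast
  show lab: "labC (insAt 0 q s) = Suc m - q" unfolding labC_def using r l by (simp add: ins0_0)
  show par: "parC (insAt 0 q s) = s" unfolding parC_def using r G(3) by simp
  show "choC (insAt 0 q s) = (Suc m - q \<le> labC s, Suc m - q)" unfolding choC_def using r lab par by simp
qed

lemma ch1_facts:
  assumes s: "s \<in> Cset m" and m: "1 \<le> m" and q: "s ! 0 < q" "q \<le> Suc m"
    and r: "remv 1 (insAt 1 q s)" and nr: "\<not> remv 0 (insAt 1 q s)"
  shows "insAt 1 q s \<in> Cset (Suc m)" "labC (insAt 1 q s) = Suc (Suc m) - q"
    "\<And>k. k \<ge> 1 \<Longrightarrow> tau_perm k (insAt 1 q s) = tau_perm k s + ((Suc (Suc m) - q) choose (k - 1))"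
    "parC (insAt 1 q s) = s" "choC (insAt 1 q s) = (False, Suc (Suc m) - q)"
proof -
  have q1: "1 \<le> q" using q(1) by simp
  have p1: "(1::nat) \<le> 1" "(1::nat) = 1 \<Longrightarrow> s ! 0 < q" using q(1) by auto
  note G = child_gen[OF s m p1(1) q1 q(2) r p1(2)]
  show "insAt 1 q s \<in> Cset (Suc m)" by (rule G(1))
  show "\<And>k. k \<ge> 1 \<Longrightarrow> tau_perm k (insAt 1 q s) = tau_perm k s + ((Suc (Suc m) - q) choose (k - 1))"
    using G(2) q(2) by (simp add: Suc_diff_le)
  have l: "length (insAt 1 q s) = Suc m" using G(1) Cset_D(3) by blast
  have ls: "1 \<le> length s" using s m Cset_D(3) by simp
  show lab: "labC (insAt 1 q s) = Suc (Suc m) - q" unfolding labC_def using nr l ins1_1[OF ls] by simp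
  show par: "parC (insAt 1 q s) = s" unfolding parC_def using nr G(3) by simp
  show "choC (insAt 1 q s) = (False, Suc (Suc m) - q)" unfolding choC_def using nr lab by simp
qed

lemma s0_range:
  assumes "s \<in> Cset m" "1 \<le> m"
  shows "1 \<le> s ! 0" "s ! 0 \<le> m"
  using Cset_D[OF assms(1)] assms(2) nth_mem[of 0 s] by auto

lemma val_idx:
  assumes "s \<in> Cset m" "1 \<le> v" "v \<le> m"
  obtains j where "j < m" "s ! j = v"
  using Cset_D[OF assms(1)] assms(2,3) by (metis atLeastAtMost_iff in_set_conv_nth)

lemma dst_C:
  assumes "s \<in> Cset m" "i < m" "j < m" "s ! i = s ! j"
  shows "i = j"
  using Cset_D[OF assms(1)] assms(2-4) nth_eq_iff_index_eq by blast

lemma child_props: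
  assumes s: "s \<in> Cset m" and m: "1 \<le> m" and c: "c \<in> choices (labC s)"
  shows "chC s c \<in> Cset (Suc m) \<and> labC (chC s c) = snd c
    \<and> (\<forall>k\<ge>1. tau_perm k (chC s c) = tau_perm k s + (snd c choose (k - 1)))
    \<and> parC (chC s c) = s \<and> choC (chC s c) = c"
proof -
  note S = Cset_D[OF s]
  obtain b i where c': "c = (b, i)" by (cases c)
  let ?t = "labC s"
  let ?s0 = "s ! 0"
  have s0: "1 \<le> ?s0" "?s0 \<le> m" using s0_range[OF s m] by auto
  have ls: "length s = m" by (rule S(3))
  show ?thesis
  proof (cases "remv 0 s")
    case True
    have t: "?t = m - ?s0" unfolding labC_def using True ls by simp
    show ?thesis
    proof (cases b)
      case True
      then have i: "i \<le> ?t" using c c' unfolding choices_def by auto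
      define q where "q = Suc m - i"
      have qv: "1 \<le> q" "q \<le> Suc m" "?s0 < q" using i t s0 unfolding q_def by auto
      have ch: "chC s c = insAt 0 q s" unfolding chC_def c' q_def using True ls by simp
      have r: "remv 0 (insAt 0 q s)"
        unfolding remv_ins0
      proof (intro allI impI)
        fix a b' assume h: "a < b'" "b' < length s" "q \<le> s ! a" "q \<le> s ! b'"
        have "a \<noteq> 0"
        proof
          assume "a = 0" then show False using h qv by simp
        qed
        then show "s ! a < s ! b'"
          using \<open>remv 0 s\<close>[unfolded remv_def, rule_format, of a b'] h qv by auto
      qed
      note F = ch0_facts[OF s m qv(1,2) r]
      have e: "Suc m - q = i" unfolding q_def using i t s0 by auto
      show ?thesis using F ch e c' \<open>b\<close> i by auto
    next
      case False
      then have i: "1 \<le> i" "i \<le> Suc ?t" using c c' unfolding choices_def by auto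
      show ?thesis
      proof (cases "i = Suc ?t")
        case True
        have ch: "chC s c = insAt 0 ?s0 s" unfolding chC_def c' using True \<open>remv 0 s\<close> \<open>\<not> b\<close> by simp
        have r: "remv 0 (insAt 0 ?s0 s)"
          unfolding remv_ins0
        proof (intro allI impI)
          fix a b' assume h: "a < b'" "b' < length s" "?s0 \<le> s ! a" "?s0 \<le> s ! b'"
          have ne: "s ! b' \<noteq> ?s0" using dst_C[OF s, of b' 0] h ls by auto
          show "s ! a < s ! b'"
          proof (cases "a = 0")
            case True then show ?thesis using ne h by simp
          next
            case False
            have "s ! a \<noteq> ?s0" using dst_C[OF s, of a 0] h ls False by auto
            then show ?thesis
              using \<open>remv 0 s\<close>[unfolded remv_def, rule_format, of a b'] h False ne by auto
          qed
        qed
        have qv: "1 \<le> ?s0" "?s0 \<le> Suc m" using s0 by auto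
        note F = ch0_facts[OF s m qv r]
        have e: "Suc m - ?s0 = i" using True t s0 by auto
        show ?thesis using F ch e c' \<open>\<not> b\<close> t True by auto
      next
        case False
        then have i': "i \<le> ?t" using i by simp
        define q where "q = m + 2 - i"
        have qv: "?s0 + 2 \<le> q" "q \<le> Suc m" using i i' t s0 unfolding q_def by auto
        have ch: "chC s c = insAt 1 q s" unfolding chC_def c' q_def using False \<open>\<not> b\<close> ls by simp
        have r: "remv 1 (insAt 1 q s)"
          unfolding remv_ins1[OF \<open>1 \<le> m\<close>[folded ls]]
        proof (intro allI impI)
          fix a b' assume h: "1 \<le> a" "a < b'" "b' < length s" "q \<le> s ! a" "q \<le> s ! b'"
          then show "s ! a < s ! b'"
            using \<open>remv 0 s\<close>[unfolded remv_def, rule_format, of a b'] qv by auto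
        qed
        have "1 \<le> ?s0 + 1" "?s0 + 1 \<le> m" using qv by auto
        then obtain j where j: "j < m" "s ! j = ?s0 + 1" using val_idx[OF s] by blast
        have j0: "j \<noteq> 0"
        proof
          assume "j = 0" then show False using j by simp
        qed
        have t0: "insAt 1 q s ! 0 = ?s0" using ins1_0[of s q] m ls qv shift_small by simp
        have t1: "insAt 1 q s ! 1 = q" using ins1_1[of s q] m ls by simp
        have tj: "insAt 1 q s ! Suc j = ?s0 + 1" using ins1_Suc[of j s q] j j0 ls qv shift_small by simp
        have lt: "length (insAt 1 q s) = Suc m" using length_insAt[of 1 s q] m ls by simp
        have nr: "\<not> remv 0 (insAt 1 q s)"
        proof
          assume "remv 0 (insAt 1 q s)"
          from this[unfolded remv_def, rule_format, of 1 "Suc j"]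
          show False using t0 t1 tj j j0 qv lt by auto
        qed
        have q0: "?s0 < q" using qv by simp
        note F = ch1_facts[OF s m q0 qv(2) r nr]
        have e: "Suc (Suc m) - q = i" unfolding q_def using i i' t s0 by auto
        show ?thesis using F ch e c' \<open>\<not> b\<close> by auto
      qed
    qed
  next
    case False
    note N = not_remv0[OF s False]
    let ?y = "s ! 1"
    have t: "?t = Suc m - ?y" unfolding labC_def using False ls by simp
    have y: "?y \<le> m" using S(2,3) N(1) nth_mem[of 1 s] by auto
    show ?thesis
    proof (cases b)
      case True
      then have i: "i \<le> ?t" using c c' unfolding choices_def by auto
      define q where "q = Suc m - i"
      have qv: "1 \<le> q" "q \<le> Suc m" "?y \<le> q" using i t y N(3) unfolding q_def by auto
      have ch: "chC s c = insAt 0 q s" unfolding chC_def c' q_def using True ls by simp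
      have r: "remv 0 (insAt 0 q s)"
        unfolding remv_ins0
      proof (intro allI impI)
        fix a b' assume h: "a < b'" "b' < length s" "q \<le> s ! a" "q \<le> s ! b'"
        have a0: "a \<noteq> 0"
        proof
          assume "a = 0" then show False using h qv N(3) by simp
        qed
        have nb: "s ! b' \<noteq> ?y" using dst_C[OF s, of b' 1] h a0 ls by auto
        show "s ! a < s ! b'"
        proof (cases "a = 1")
          case True then show ?thesis using nb h qv by auto
        next
          case False
          have "s ! a \<noteq> ?y" using dst_C[OF s, of a 1] h ls False by auto
          then show ?thesis
            using N(2)[unfolded remv_def, rule_format, of a b'] h False a0 nb qv by auto
        qed
      qed
      note F = ch0_facts[OF s m qv(1,2) r]
      have e: "Suc m - q = i" unfolding q_def using i t y by auto
      show ?thesis using F ch e c' \<open>b\<close> i by auto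
    next
      case False
      then have i: "1 \<le> i" "i \<le> Suc ?t" using c c' unfolding choices_def by auto
      define q where "q = m + 2 - i"
      have qv: "?y \<le> q" "q \<le> Suc m" using i t y unfolding q_def by auto
      have ch: "chC s c = insAt 1 q s" unfolding chC_def c' q_def using False \<open>\<not> remv 0 s\<close> ls by simp
      have r: "remv 1 (insAt 1 q s)"
        unfolding remv_ins1[OF \<open>1 \<le> m\<close>[folded ls]]
      proof (intro allI impI)
        fix a b' assume h: "1 \<le> a" "a < b'" "b' < length s" "q \<le> s ! a" "q \<le> s ! b'"
        have nb: "s ! b' \<noteq> ?y" using dst_C[OF s, of b' 1] h ls by auto
        show "s ! a < s ! b'"
        proof (cases "a = 1")
          case True then show ?thesis using nb h qv by auto
        next
          case False
          have "s ! a \<noteq> ?y" using dst_C[OF s, of a 1] h ls False by auto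
          then show ?thesis
            using N(2)[unfolded remv_def, rule_format, of a b'] h False nb qv by auto
        qed
      qed
      have q0: "?s0 < q" using qv N(3) by simp
      obtain j1 j2 where j: "0 < j1" "j1 < j2" "j2 < m" "?s0 < s ! j1" "?s0 < s ! j2" "\<not> s ! j1 < s ! j2"
        using \<open>\<not> remv 0 s\<close> ls unfolding remv_def by blast
      have t0: "insAt 1 q s ! 0 = ?s0" using ins1_0[of s q] m ls q0 shift_small by simp
      have tj: "insAt 1 q s ! Suc j1 = shift q (s ! j1)" "insAt 1 q s ! Suc j2 = shift q (s ! j2)"
        using ins1_Suc[of _ s q] j ls by auto
      have lt: "length (insAt 1 q s) = Suc m" using length_insAt[of 1 s q] m ls by simp
      have nr: "\<not> remv 0 (insAt 1 q s)"
      proof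
        assume "remv 0 (insAt 1 q s)"
        from this[unfolded remv_def, rule_format, of "Suc j1" "Suc j2"]
        show False using t0 tj j lt shift_less[of q "s ! j1" "s ! j2"]
            shift_ge[of "s ! j1" q] shift_ge[of "s ! j2" q] by auto
      qed
      note F = ch1_facts[OF s m q0 qv(2) r nr]
      have e: "Suc (Suc m) - q = i" unfolding q_def using i t y by auto
      show ?thesis using F ch e c' \<open>\<not> b\<close> by auto
    qed
  qed
qed

lemma parent_props:
  assumes tC: "t \<in> Cset (Suc m)" and m: "1 \<le> m"
  shows "parC t \<in> Cset m \<and> choC t \<in> choices (labC (parC t)) \<and> chC (parC t) (choC t) = t"
proof -
  note T = Cset_D[OF tC]
  show ?thesis
  proof (cases "remv 0 t")
    case True
    define s where "s = delAt 0 t"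
    define q where "q = t ! 0"
    have sC: "s \<in> Cset m" unfolding s_def Cset_def
      using perms_delAt[OF T(5), of 0] avC_delAt[OF T(4) T(1), of 0] T(3) by simp
    have ls: "length s = m" using Cset_D(3)[OF sC] .
    have te: "t = insAt 0 q s" unfolding s_def q_def using insAt_delAt[OF T(1), of 0] T(3) by simp
    have qv: "1 \<le> q" "q \<le> Suc m" unfolding q_def using T(2,3) nth_mem[of 0 t] by auto
    have R: "\<forall>a b. a < b \<longrightarrow> b < length s \<longrightarrow> q \<le> s ! a \<longrightarrow> q \<le> s ! b \<longrightarrow> s ! a < s ! b"
      using True unfolding te remv_ins0 .
    have par: "parC t = s" unfolding parC_def s_def using True by simp
    have labt: "labC t = Suc m - q" unfolding labC_def q_def using True T(3) by simp
    have cho: "choC t = (Suc m - q \<le> labC s, Suc m - q)" unfolding choC_def using True par labt by simp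
    have s0: "1 \<le> s ! 0" "s ! 0 \<le> m" using s0_range[OF sC m] by auto
    show ?thesis
    proof (cases "remv 0 s")
      case True
      have ts: "labC s = m - s ! 0" unfolding labC_def using True ls by simp
      have qs: "s ! 0 \<le> q"
      proof (rule ccontr)
        assume "\<not> s ! 0 \<le> q"
        then have "q < s ! 0" by simp
        then have "q \<le> m" using s0 by simp
        then obtain j where j: "j < m" "s ! j = q" using val_idx[OF sC qv(1)] by blast
        have "j \<noteq> 0"
        proof
          assume "j = 0" then show False using j \<open>q < s ! 0\<close> by simp
        qed
        then show False using R[rule_format, of 0 j] j ls \<open>q < s ! 0\<close> by auto
      qed
      show ?thesis
      proof (cases "q = s ! 0")
        case True
        have "choC t = (False, Suc (labC s))" using cho ts True s0 by auto
        moreover have "(False, Suc (labC s)) \<in> choices (labC s)" unfolding choices_def by auto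
        moreover have "chC s (False, Suc (labC s)) = t"
          unfolding chC_def using \<open>remv 0 s\<close> te True by simp
        ultimately show ?thesis using sC par by simp
      next
        case False
        then have lt: "Suc m - q \<le> labC s" using qs ts qv by auto
        have "choC t = (True, Suc m - q)" using cho lt by simp
        moreover have "(True, Suc m - q) \<in> choices (labC s)" unfolding choices_def using lt by auto
        moreover have "chC s (True, Suc m - q) = t"
          unfolding chC_def using te qv ls by simp
        ultimately show ?thesis using sC par by simp
      qed
    next
      case False
      note N = not_remv0[OF sC False]
      have ts: "labC s = Suc m - s ! 1" unfolding labC_def using False ls by simp
      obtain jy where jy: "2 \<le> jy" "jy < m" "s ! jy = s ! 1 - 1" using N(4) by blast
      have qy: "s ! 1 \<le> q"
      proof (rule ccontr)
        assume "\<not> s ! 1 \<le> q"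
        then have "q \<le> s ! 1 - 1" by simp
        have "s ! 1 < s ! jy" by (rule R[rule_format]) (use jy ls \<open>q \<le> s ! 1 - 1\<close> in auto)
        with jy show False by simp
      qed
      then have lt: "Suc m - q \<le> labC s" using ts by auto
      have "choC t = (True, Suc m - q)" using cho lt by simp
      moreover have "(True, Suc m - q) \<in> choices (labC s)" unfolding choices_def using lt by auto
      moreover have "chC s (True, Suc m - q) = t"
        unfolding chC_def using te qv ls by simp
      ultimately show ?thesis using sC par by simp
    qed
  next
    case False
    note N = not_remv0[OF tC False]
    define s where "s = delAt 1 t"
    define q where "q = t ! 1"
    have sC: "s \<in> Cset m" unfolding s_def Cset_def
      using perms_delAt[OF T(5), of 1] avC_delAt[OF T(4) T(1), of 1] T(3) m by simp
    have ls: "length s = m" using Cset_D(3)[OF sC] .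
    have ls1: "1 \<le> length s" using ls m by simp
    have te: "t = insAt 1 q s" unfolding s_def q_def using insAt_delAt[OF T(1), of 1] T(3) m by simp
    have qv: "1 \<le> q" "q \<le> Suc m" unfolding q_def using T(2,3) nth_mem[of 1 t] m by auto
    have R: "\<forall>a b. 1 \<le> a \<longrightarrow> a < b \<longrightarrow> b < length s \<longrightarrow> q \<le> s ! a \<longrightarrow> q \<le> s ! b \<longrightarrow> s ! a < s ! b"
      using N(2) unfolding te remv_ins1[OF ls1] .
    have par: "parC t = s" unfolding parC_def s_def using False by simp
    have labt: "labC t = Suc (Suc m) - q" unfolding labC_def q_def using False T(3) by simp
    have cho: "choC t = (False, Suc (Suc m) - q)" unfolding choC_def using False labt by simp
    have t0: "t ! 0 = shift q (s ! 0)" using te ins1_0[OF ls1] by simp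
    have s0q: "s ! 0 < q" using t0 N(3) shift_lt[of q "s ! 0"] unfolding q_def by simp
    have s0e: "s ! 0 = t ! 0" using t0 s0q shift_small by simp
    have i1: "1 \<le> Suc (Suc m) - q" using qv by simp
    show ?thesis
    proof (cases "remv 0 s")
      case True
      have ts: "labC s = m - s ! 0" unfolding labC_def using True ls by simp
      have lt: "Suc (Suc m) - q \<le> labC s" using ts N(5) s0e qv unfolding q_def by auto
      have "(False, Suc (Suc m) - q) \<in> choices (labC s)" unfolding choices_def using lt i1 by auto
      moreover have "chC s (False, Suc (Suc m) - q) = t"
        unfolding chC_def using te qv ls lt by auto
      ultimately show ?thesis using sC par cho by simp
    next
      case False
      note N2 = not_remv0[OF sC False]
      have ts: "labC s = Suc m - s ! 1" unfolding labC_def using False ls by simp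
      obtain jy where jy: "2 \<le> jy" "jy < m" "s ! jy = s ! 1 - 1" using N2(4) by blast
      have qy: "s ! 1 \<le> q"
      proof (rule ccontr)
        assume "\<not> s ! 1 \<le> q"
        then have "q \<le> s ! 1 - 1" by simp
        have "s ! 1 < s ! jy" by (rule R[rule_format]) (use jy ls \<open>q \<le> s ! 1 - 1\<close> in auto)
        with jy show False by simp
      qed
      have s1: "s ! 1 \<le> m" using Cset_D(2,3)[OF sC] N2(1) nth_mem[of 1 s] by auto
      have lt: "Suc (Suc m) - q \<le> Suc (labC s)" using ts qy s1 by auto
      have "(False, Suc (Suc m) - q) \<in> choices (labC s)" unfolding choices_def using lt i1 by auto
      moreover have "chC s (False, Suc (Suc m) - q) = t"
        unfolding chC_def using te qv ls False by auto
      ultimately show ?thesis using sC par cho by simp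
    qed
  qed
qed


definition endp :: "int \<times> int \<Rightarrow> step list \<Rightarrow> int \<times> int" where
  "endp p ss = last (walk p ss)"

lemma walk_ne: "walk p ss \<noteq> []"
  by (cases ss) auto

lemma endp_Nil[simp]: "endp p [] = p"
  unfolding endp_def by simp

lemma endp_Cons[simp]: "endp p (s # ss) = endp (step_end p s) ss"
  unfolding endp_def using walk_ne by simp

lemma walk_append: "walk p (xs @ ys) = butlast (walk p xs) @ walk (endp p xs) ys"
proof (induction xs arbitrary: p)
  case Nil then show ?case by simp
next
  case (Cons x xs)
  then show ?case using walk_ne[of "step_end p x" xs] by simp
qed

lemma endp_append: "endp p (xs @ ys) = endp (endp p xs) ys"
  by (induction xs arbitrary: p) auto

lemma set_walk_append: "set (walk p (xs @ ys)) = set (walk p xs) \<union> set (walk (endp p xs) ys)"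
proof -
  have w: "walk p xs = butlast (walk p xs) @ [endp p xs]" unfolding endp_def using walk_ne
    by (rule append_butlast_last_id[symmetric])
  have sW: "set (walk p xs) = set (butlast (walk p xs)) \<union> {endp p xs}"
    by (subst w) simp
  have h: "hd (walk q ys) = q" for q by (cases ys) auto
  have e: "endp p xs \<in> set (walk (endp p xs) ys)" using h[of "endp p xs"] walk_ne
    by (metis list.set_sel(1))
  show ?thesis unfolding walk_append set_append using sW e by blast
qed

lemma heights_append: "heights p (xs @ ys) = heights p xs @ heights (endp p xs) ys"
proof (induction xs arbitrary: p)
  case Nil then show ?case by simp
next
  case (Cons x xs)
  obtain a c where p: "p = (a, c)" by (cases p)
  show ?case using Cons.IH unfolding p by simp
qed

lemma walk_rep: "set (walk (a, c) (replicate j East)) = {(a + int l, c) | l. l \<le> j}"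
proof (induction j arbitrary: a)
  case 0 then show ?case by simp
next
  case (Suc j)
  have "set (walk (a, c) (replicate (Suc j) East)) = insert (a, c) (set (walk (a + 1, c) (replicate j East)))"
    by simp
  also have "\<dots> = insert (a, c) {(a + 1 + int l, c) | l. l \<le> j}" using Suc.IH by simp
  also have "\<dots> = {(a + int l, c) | l. l \<le> Suc j}"
  proof (rule set_eqI, rule iffI)
    fix x assume "x \<in> insert (a, c) {(a + 1 + int l, c) | l. l \<le> j}"
    then show "x \<in> {(a + int l, c) | l. l \<le> Suc j}"
    proof
      assume "x = (a, c)" then show ?thesis by (intro CollectI exI[of _ 0]) simp
    next
      assume "x \<in> {(a + 1 + int l, c) | l. l \<le> j}"
      then obtain l where "x = (a + 1 + int l, c)" "l \<le> j" by blast
      then show ?thesis by (intro CollectI exI[of _ "Suc l"]) simp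
    qed
  next
    fix x assume "x \<in> {(a + int l, c) | l. l \<le> Suc j}"
    then obtain l where l: "x = (a + int l, c)" "l \<le> Suc j" by blast
    show "x \<in> insert (a, c) {(a + 1 + int l, c) | l. l \<le> j}"
    proof (cases l)
      case 0 then show ?thesis using l by simp
    next
      case (Suc l')
      then have "x = (a + 1 + int l', c)" "l' \<le> j" using l by auto
      then show ?thesis by blast
    qed
  qed
  finally show ?case .
qed

lemma endp_rep: "endp (a, c) (replicate j East) = (a + int j, c)"
  by (induction j arbitrary: a) auto

lemma heights_rep: "heights (a, c) (replicate j East) = map (\<lambda>l. c - a - int l) [0..<j]"
proof (induction j arbitrary: a)
  case 0 then show ?case by simp
next
  case (Suc j)
  have "heights (a, c) (replicate (Suc j) East) = [c - a] @ heights (a + 1, c) (replicate j East)" by simp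
  also have "\<dots> = [c - a] @ map (\<lambda>l. c - (a + 1) - int l) [0..<j]" using Suc.IH by simp
  also have "\<dots> = map (\<lambda>l. c - a - int l) [0..<Suc j]"
    by (simp add: map_upt_Suc del: upt_Suc)
  finally show ?case .
qed

definition erun :: "step list \<Rightarrow> nat" where
  "erun xs = length (takeWhile (\<lambda>s. s = East) (rev xs))"

lemma erun_app: "X \<noteq> East \<Longrightarrow> erun (r @ X # replicate j East) = j"
  unfolding erun_def by (simp add: takeWhile_append)

lemma erun_app_ge: "j \<le> erun (r @ replicate j East)"
  unfolding erun_def by (simp add: takeWhile_append)

lemma erun_le: "erun xs \<le> length xs"
  unfolding erun_def by (metis length_rev length_takeWhile_le)

lemma erun_drop:
  assumes "i \<le> erun xs"
  shows "drop (length xs - i) xs = replicate i East"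
proof -
  let ?T = "takeWhile (\<lambda>s. s = East) (rev xs)"
  have all: "\<forall>y\<in>set ?T. y = East" by (auto dest: set_takeWhileD)
  have T: "?T = replicate (erun xs) East" unfolding erun_def
    using replicate_length_same[OF all] by simp
  have r: "rev xs = ?T @ dropWhile (\<lambda>s. s = East) (rev xs)" by simp
  have il: "i \<le> length ?T" using assms unfolding erun_def by simp
  have "take i (rev xs) = take i (?T @ dropWhile (\<lambda>s. s = East) (rev xs))" using r by simp
  also have "\<dots> = take i ?T" using il by (simp add: take_append del: takeWhile_dropWhile_id)
  also have "\<dots> = replicate i East" using T assms by simp
  finally have tk: "take i (rev xs) = replicate i East" .
  have iL: "i \<le> length xs" using assms erun_le le_trans by blast
  have "rev (drop (length xs - i) xs) = take i (rev xs)" using iL by (simp add: rev_drop)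
  then have "rev (drop (length xs - i) xs) = replicate i East" using tk by simp
  then show ?thesis by (metis rev_replicate rev_rev_ident)
qed

lemma erun_split:
  assumes "erun xs < length xs"
  shows "xs = take (length xs - erun xs - 1) xs @ xs ! (length xs - erun xs - 1) # replicate (erun xs) East"
    "xs ! (length xs - erun xs - 1) \<noteq> East"
proof -
  let ?j = "erun xs"
  let ?L = "length xs"
  have d: "drop (?L - ?j) xs = replicate ?j East" by (rule erun_drop) simp
  have e: "xs = take (?L - ?j - 1) xs @ xs ! (?L - ?j - 1) # drop (Suc (?L - ?j - 1)) xs"
    using assms id_take_nth_drop[of "?L - ?j - 1" xs] by simp
  have s: "Suc (?L - ?j - 1) = ?L - ?j" using assms by simp
  show xe: "xs = take (?L - ?j - 1) xs @ xs ! (?L - ?j - 1) # replicate ?j East" using e d s by simp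
  show "xs ! (?L - ?j - 1) \<noteq> East"
  proof
    assume "xs ! (?L - ?j - 1) = East"
    then have "xs = take (?L - ?j - 1) xs @ replicate (Suc ?j) East" using xe by simp
    then have "Suc ?j \<le> erun xs" using erun_app_ge[of "Suc ?j" "take (?L - ?j - 1) xs"] by simp
    then show False by simp
  qed
qed


definition chS :: "step list \<Rightarrow> bool \<times> nat \<Rightarrow> step list" where
  "chS p c = (if fst c then take (length p - snd c) p @ Diag # drop (length p - snd c) p
     else take (Suc (length p) - snd c) p @ North # East # drop (Suc (length p) - snd c) p)"

definition parS :: "step list \<Rightarrow> step list" where
  "parS p = (if p ! (length p - erun p - 1) = Diag then take (length p - erun p - 1) p @ replicate (erun p) East
     else take (length p - erun p - 1) p @ replicate (erun p - 1) East)"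

definition choS :: "step list \<Rightarrow> bool \<times> nat" where
  "choS p = (p ! (length p - erun p - 1) = Diag, erun p)"

lemma S_iff: "ss \<in> schroeder n \<longleftrightarrow> endp (0, 0) ss = (int n, int n) \<and> (\<forall>x\<in>set (walk (0, 0) ss). fst x \<le> snd x)"
  unfolding schroeder_def endp_def by auto

lemma tau_path_heights: "tau_path k ss = (0 choose (k - 1)) + sum_list (map (\<lambda>h. nat h choose (k - 1)) (heights (0, 0) ss))"
  unfolding tau_path_def ..

lemma endp_in: "endp p ss \<in> set (walk p ss)"
  unfolding endp_def using walk_ne by simp

lemma par_cho_D:
  "parS (r @ Diag # replicate j East) = r @ replicate j East \<and> choS (r @ Diag # replicate j East) = (True, j)"
proof -
  have e: "erun (r @ Diag # replicate j East) = j" by (rule erun_app) simp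
  have l: "length (r @ Diag # replicate j East) - j - 1 = length r" by simp
  have n: "(r @ Diag # replicate j East) ! length r = Diag" by simp
  have t: "take (length r) (r @ Diag # replicate j East) = r" by simp
  show ?thesis unfolding parS_def choS_def e l n t by simp
qed

lemma par_cho_N:
  "parS (r @ North # replicate j East) = r @ replicate (j - 1) East \<and> choS (r @ North # replicate j East) = (False, j)"
proof -
  have e: "erun (r @ North # replicate j East) = j" by (rule erun_app) simp
  have l: "length (r @ North # replicate j East) - j - 1 = length r" by simp
  have n: "(r @ North # replicate j East) ! length r = North" by simp
  have t: "take (length r) (r @ North # replicate j East) = r" by simp
  show ?thesis unfolding parS_def choS_def e l n t by simp
qed

lemma sum_ins: "sum_list (map f (A @ [x] @ B)) = sum_list (map f (A @ B)) + (f x :: nat)"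
  by simp

lemma child_path:
  assumes p: "p \<in> schroeder n" and c: "c \<in> choices (erun p)"
  shows "chS p c \<in> schroeder (Suc n) \<and> erun (chS p c) = snd c
    \<and> (\<forall>k\<ge>1. tau_path k (chS p c) = tau_path k p + (snd c choose (k - 1)))
    \<and> parS (chS p c) = p \<and> choS (chS p c) = c"
proof -
  obtain b i where c': "c = (b, i)" by (cases c)
  have P: "endp (0, 0) p = (int n, int n)" "\<forall>x\<in>set (walk (0, 0) p). fst x \<le> snd x"
    using p S_iff by auto
  let ?L = "length p"
  show ?thesis
  proof (cases b)
    case True
    then have i: "i \<le> erun p" using c c' unfolding choices_def by auto
    define r where "r = take (?L - i) p"
    have d: "drop (?L - i) p = replicate i East" using i by (rule erun_drop)
    have pe: "p = r @ replicate i East" unfolding r_def using d by (metis append_take_drop_id)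
    have ch: "chS p c = r @ Diag # replicate i East" unfolding chS_def c' r_def using True d by simp
    obtain a cc where ac: "endp (0, 0) r = (a, cc)" by (cases "endp (0, 0) r")
    have "endp (0, 0) p = (a + int i, cc)" using ac endp_rep by (subst pe) (simp add: endp_append)
    then have a: "a = int n - int i" "cc = int n" using P(1) by auto
    have wr: "set (walk (0, 0) r) \<subseteq> set (walk (0, 0) p)" using set_walk_append[of "(0,0)" r] pe by auto
    have "endp (0, 0) (chS p c) = (int (Suc n), int (Suc n))"
      unfolding ch using ac a by (simp add: endp_append endp_rep)
    moreover have "\<forall>x\<in>set (walk (0, 0) (chS p c)). fst x \<le> snd x"
    proof
      fix x assume "x \<in> set (walk (0, 0) (chS p c))"
      then have "x \<in> set (walk (0, 0) r) \<or> x = (a, cc) \<or> x \<in> set (walk (a + 1, cc + 1) (replicate i East))"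
        unfolding ch set_walk_append ac by auto
      then show "fst x \<le> snd x"
      proof (elim disjE)
        assume "x \<in> set (walk (0, 0) r)" then show ?thesis using wr P(2) by auto
      next
        assume "x = (a, cc)" then show ?thesis using a by simp
      next
        assume "x \<in> set (walk (a + 1, cc + 1) (replicate i East))"
        then obtain l where "x = (a + 1 + int l, cc + 1)" "l \<le> i" unfolding walk_rep by blast
        then show ?thesis using a by simp
      qed
    qed
    ultimately have S: "chS p c \<in> schroeder (Suc n)" using S_iff by blast
    have hc: "heights (0, 0) (chS p c) = heights (0, 0) r @ [int i] @ map (\<lambda>l. int i - int l) [0..<i]"
      unfolding ch heights_append ac using a by (simp add: heights_rep)
    have hp: "heights (0, 0) p = heights (0, 0) r @ map (\<lambda>l. int i - int l) [0..<i]"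
      by (subst pe) (simp add: heights_append ac heights_rep a)
    have tau: "\<forall>k\<ge>1. tau_path k (chS p c) = tau_path k p + (snd c choose (k - 1))"
      using hc hp by (simp add: tau_path_heights c')
    have pc: "parS (chS p c) = p \<and> choS (chS p c) = c" unfolding ch using par_cho_D pe c' True by simp
    have "erun (chS p c) = snd c" unfolding ch by (simp add: erun_app c')
    then show ?thesis using S tau pc by simp
  next
    case False
    then have i: "1 \<le> i" "i \<le> Suc (erun p)" using c c' unfolding choices_def by auto
    define r where "r = take (Suc ?L - i) p"
    have i1: "i - 1 \<le> erun p" using i by simp
    have eL: "erun p \<le> ?L" by (rule erun_le)
    have ll: "?L - (i - 1) = Suc ?L - i" using i eL by auto
    have d: "drop (Suc ?L - i) p = replicate (i - 1) East" using erun_drop[OF i1] ll by simp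
    have pe: "p = r @ replicate (i - 1) East" unfolding r_def using d by (metis append_take_drop_id)
    have ch0: "chS p c = r @ North # East # replicate (i - 1) East" unfolding chS_def c' r_def using False d by simp
    have ch: "chS p c = r @ North # replicate i East" using ch0 i
      by (metis Suc_diff_1 less_le_trans replicate_Suc zero_less_one)
    obtain a cc where ac: "endp (0, 0) r = (a, cc)" by (cases "endp (0, 0) r")
    have "endp (0, 0) p = (a + int (i - 1), cc)" using ac endp_rep by (subst pe) (simp add: endp_append)
    then have a: "a = int n - int i + 1" "cc = int n" using P(1) i by auto
    have wr: "set (walk (0, 0) r) \<subseteq> set (walk (0, 0) p)" using set_walk_append[of "(0,0)" r] pe by auto
    have "endp (0, 0) (chS p c) = (int (Suc n), int (Suc n))"
      unfolding ch using ac a by (simp add: endp_append endp_rep)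
    moreover have "\<forall>x\<in>set (walk (0, 0) (chS p c)). fst x \<le> snd x"
    proof
      fix x assume "x \<in> set (walk (0, 0) (chS p c))"
      then have "x \<in> set (walk (0, 0) r) \<or> x = (a, cc) \<or> x \<in> set (walk (a, cc + 1) (replicate i East))"
        unfolding ch set_walk_append ac by auto
      then show "fst x \<le> snd x"
      proof (elim disjE)
        assume "x \<in> set (walk (0, 0) r)" then show ?thesis using wr P(2) by auto
      next
        assume "x = (a, cc)" then show ?thesis using a i by simp
      next
        assume "x \<in> set (walk (a, cc + 1) (replicate i East))"
        then obtain l where "x = (a + int l, cc + 1)" "l \<le> i" unfolding walk_rep by blast
        then show ?thesis using a by simp
      qed
    qed
    ultimately have S: "chS p c \<in> schroeder (Suc n)" using S_iff by blast
    have hc: "heights (0, 0) (chS p c) = heights (0, 0) r @ [int i] @ map (\<lambda>l. int (i - 1) - int l) [0..<i - 1]"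
    proof -
      have "heights (0, 0) (chS p c) = heights (0, 0) r @ heights (a, cc + 1) (East # replicate (i - 1) East)"
        unfolding ch0 heights_append ac by simp
      also have "\<dots> = heights (0, 0) r @ [int i] @ heights (a + 1, cc + 1) (replicate (i - 1) East)"
        using a i by simp
      also have "\<dots> = heights (0, 0) r @ [int i] @ map (\<lambda>l. int (i - 1) - int l) [0..<i - 1]"
        using a i by (simp add: heights_rep)
      finally show ?thesis .
    qed
    have hp: "heights (0, 0) p = heights (0, 0) r @ map (\<lambda>l. int (i - 1) - int l) [0..<i - 1]"
      using a i by (subst pe) (simp add: heights_append ac heights_rep)
    have tau: "\<forall>k\<ge>1. tau_path k (chS p c) = tau_path k p + (snd c choose (k - 1))"
      using hc hp by (simp add: tau_path_heights c')
    have pc: "parS (chS p c) = p \<and> choS (chS p c) = c" unfolding ch using par_cho_N pe c' False by simp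
    have "erun (chS p c) = snd c" unfolding ch by (simp add: erun_app c')
    then show ?thesis using S tau pc by simp
  qed
qed

lemma endp_sum: "endp (a, c) ss = (a', c') \<Longrightarrow> a + c + int (length ss) \<le> a' + c'"
proof (induction ss arbitrary: a c)
  case Nil then show ?case by simp
next
  case (Cons s ss)
  obtain a1 c1 where e: "step_end (a, c) s = (a1, c1)" by (cases "step_end (a, c) s")
  have "a1 + c1 \<ge> a + c + 1" using e by (cases s) auto
  moreover have "a1 + c1 + int (length ss) \<le> a' + c'" using Cons.IH[of a1 c1] Cons.prems e by simp
  ultimately show ?case by simp
qed

lemma S0: "schroeder 0 = {[]}"
proof
  show "schroeder 0 \<subseteq> {[]}"
  proof
    fix ss assume "ss \<in> schroeder 0"
    then have "endp (0, 0) ss = (0, 0)" using S_iff by simp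
    then have "length ss = 0" using endp_sum[of 0 0 ss 0 0] by simp
    then show "ss \<in> {[]}" by simp
  qed
  show "{[]} \<subseteq> schroeder 0" using S_iff by simp
qed

lemma erun_lt:
  assumes "p \<in> schroeder (Suc n)"
  shows "erun p < length p"
proof (rule ccontr)
  assume "\<not> erun p < length p"
  then have "erun p = length p" using erun_le[of p] by simp
  then have "drop 0 p = replicate (length p) East" using erun_drop[of "length p" p] by simp
  then have "p = replicate (length p) East" by simp
  then have "endp (0, 0) p = (int (length p), 0)" using endp_rep[of 0 0 "length p"] by simp
  then show False using assms S_iff by simp
qed

lemma parent_path:
  assumes p: "p \<in> schroeder (Suc n)"
  shows "parS p \<in> schroeder n \<and> choS p \<in> choices (erun (parS p)) \<and> chS (parS p) (choS p) = p"
proof -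
  have P: "endp (0, 0) p = (int (Suc n), int (Suc n))" "\<forall>x\<in>set (walk (0, 0) p). fst x \<le> snd x"
    using p S_iff by auto
  obtain j where jd: "j = erun p" by simp
  let ?j = j
  let ?L = "length p"
  define r where "r = take (?L - ?j - 1) p"
  define X where "X = p ! (?L - ?j - 1)"
  have lt: "?j < ?L" using p erun_lt jd by simp
  have pe: "p = r @ X # replicate ?j East" unfolding r_def X_def jd using erun_split(1)[OF lt[unfolded jd]] .
  have XE: "X \<noteq> East" unfolding X_def jd using erun_split(2)[OF lt[unfolded jd]] .
  obtain a cc where ac: "endp (0, 0) r = (a, cc)" by (cases "endp (0, 0) r")
  have wr: "set (walk (0, 0) r) \<subseteq> set (walk (0, 0) p)"
  proof -
    have "set (walk (0, 0) (r @ X # replicate ?j East)) = set (walk (0, 0) r) \<union> set (walk (endp (0, 0) r) (X # replicate ?j East))"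
      by (rule set_walk_append)
    then show ?thesis unfolding pe[symmetric] by blast
  qed
  have "(a, cc) \<in> set (walk (0, 0) p)" using endp_in[of "(0,0)" r] ac wr by auto
  then have acv: "a \<le> cc" using P(2) by auto
  show ?thesis
  proof (cases X)
    case East then show ?thesis using XE by simp
  next
    case Diag
    have pc: "parS p = r @ replicate ?j East" "choS p = (True, ?j)"
    proof -
      have "p = r @ Diag # replicate j East" using pe Diag by simp
      then show "parS p = r @ replicate ?j East" "choS p = (True, ?j)" using par_cho_D[of r j] by simp_all
    qed
    have "endp (0, 0) p = (a + 1 + int ?j, cc + 1)" by (subst pe) (simp add: endp_append ac Diag endp_rep)
    then have a: "a = int n - int ?j" "cc = int n" using P(1) by auto
    have "endp (0, 0) (parS p) = (int n, int n)" unfolding pc by (simp add: endp_append ac endp_rep a)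
    moreover have "\<forall>x\<in>set (walk (0, 0) (parS p)). fst x \<le> snd x"
    proof
      fix x assume "x \<in> set (walk (0, 0) (parS p))"
      then have "x \<in> set (walk (0, 0) r) \<or> x \<in> set (walk (a, cc) (replicate ?j East))"
        unfolding pc set_walk_append ac by auto
      then show "fst x \<le> snd x"
      proof
        assume "x \<in> set (walk (0, 0) r)" then show ?thesis using wr P(2) by auto
      next
        assume "x \<in> set (walk (a, cc) (replicate ?j East))"
        then obtain l where "x = (a + int l, cc)" "l \<le> ?j" unfolding walk_rep by blast
        then show ?thesis using a by simp
      qed
    qed
    ultimately have S: "parS p \<in> schroeder n" using S_iff by blast
    have "?j \<le> erun (parS p)" unfolding pc by (rule erun_app_ge)
    then have C: "choS p \<in> choices (erun (parS p))" unfolding pc choices_def by auto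
    have "chS (parS p) (choS p) = p"
      unfolding pc chS_def using pe Diag by simp
    then show ?thesis using S C by simp
  next
    case North
    have pc: "parS p = r @ replicate (?j - 1) East" "choS p = (False, ?j)"
    proof -
      have "p = r @ North # replicate j East" using pe North by simp
      then show "parS p = r @ replicate (?j - 1) East" "choS p = (False, ?j)" using par_cho_N[of r j] by simp_all
    qed
    have "endp (0, 0) p = (a + int ?j, cc + 1)" by (subst pe) (simp add: endp_append ac North endp_rep)
    then have a: "a + int ?j = int n + 1" "cc = int n" using P(1) by auto
    then have j1: "1 \<le> ?j" using acv by linarith
    have "endp (0, 0) (parS p) = (int n, int n)" unfolding pc using a j1 by (simp add: endp_append ac endp_rep)
    moreover have "\<forall>x\<in>set (walk (0, 0) (parS p)). fst x \<le> snd x"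
    proof
      fix x assume "x \<in> set (walk (0, 0) (parS p))"
      then have "x \<in> set (walk (0, 0) r) \<or> x \<in> set (walk (a, cc) (replicate (?j - 1) East))"
        unfolding pc set_walk_append ac by auto
      then show "fst x \<le> snd x"
      proof
        assume "x \<in> set (walk (0, 0) r)" then show ?thesis using wr P(2) by auto
      next
        assume "x \<in> set (walk (a, cc) (replicate (?j - 1) East))"
        then obtain l where "x = (a + int l, cc)" "l \<le> ?j - 1" unfolding walk_rep by blast
        then show ?thesis using a j1 by simp
      qed
    qed
    ultimately have S: "parS p \<in> schroeder n" using S_iff by blast
    have "?j - 1 \<le> erun (parS p)" unfolding pc by (rule erun_app_ge)
    then have C: "choS p \<in> choices (erun (parS p))" unfolding pc choices_def using j1 by auto
    have ls: "Suc (length (parS p)) - ?j = length r" unfolding pc using j1 by simp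
    have "chS (parS p) (choS p) = take (Suc (length (parS p)) - j) (parS p) @ North # East # drop (Suc (length (parS p)) - j) (parS p)"
      unfolding chS_def pc(2) by simp
    also have "\<dots> = r @ North # East # replicate (?j - 1) East"
      unfolding ls unfolding pc(1) by simp
    also have "\<dots> = p" using pe North j1 by (metis Suc_diff_1 less_le_trans replicate_Suc zero_less_one)
    finally show ?thesis using S C by simp
  qed
qed

lemma parS_shorter:
  assumes "p \<noteq> []"
  shows "length (parS p) < length p"
proof (cases "erun p < length p")
  case True
  show ?thesis unfolding parS_def using True by auto
next
  case False
  then have e: "erun p = length p" using erun_le[of p] by simp
  then have "p = replicate (length p) East" using erun_drop[of "length p" p] by simp
  then have "p ! 0 = East" using assms by (metis length_greater_0_conv nth_replicate)
  then show ?thesis unfolding parS_def using e assms by simp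
qed


function phi :: "step list \<Rightarrow> nat list" where
  "phi p = (if p = [] then [1] else chC (phi (parS p)) (choS p))"
  by pat_completeness auto
termination
  by (relation "measure length") (auto simp: parS_shorter)

declare phi.simps[simp del]

lemma C1: "Cset 1 = {[1]}"
proof
  show "Cset 1 \<subseteq> {[1]}"
  proof
    fix t assume "t \<in> Cset 1"
    then have "length t = 1" "set t = {1}" using Cset_D[of t 1] by auto
    then show "t \<in> {[1]}" by (cases t) auto
  qed
  have "avC [1]" unfolding avC_def by auto
  then show "{[1]} \<subseteq> Cset 1" unfolding Cset_def perms_def by auto
qed

lemma tau1: "tau_perm k [1] = tau_path k []"
proof -
  have "IS k [1] = {I. I \<subseteq> {0} \<and> card I = k}"
  proof (rule set_eqI)
    fix I :: "nat set"
    have "I \<subseteq> {..<length [1::nat]} \<longleftrightarrow> I \<subseteq> {0}" by auto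
    moreover have "I \<subseteq> {0} \<Longrightarrow> (\<forall>i \<in> I. \<forall>j \<in> I. i < j \<longrightarrow> [1::nat] ! i < [1] ! j)" by auto
    ultimately show "I \<in> IS k [1] \<longleftrightarrow> I \<in> {I. I \<subseteq> {0} \<and> card I = k}" unfolding IS_def by blast
  qed
  then have "tau_perm k [1] = 1 choose k" unfolding tau_IS using n_subsets[of "{0::nat}" k] by simp
  moreover have "tau_path k [] = (0 choose (k - 1))" unfolding tau_path_def by simp
  moreover have "(1::nat) choose k = 0 choose (k - 1)" by (cases k) auto
  ultimately show ?thesis by simp
qed

lemma phi_main:
  "bij_betw phi (schroeder n) (Cset (Suc n)) \<and>
   (\<forall>p\<in>schroeder n. labC (phi p) = erun p \<and> (\<forall>k\<ge>1. tau_perm k (phi p) = tau_path k p))"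
proof (induction n)
  case 0
  have "phi [] = [1]" by (simp add: phi.simps)
  moreover have "labC [1] = 0" unfolding labC_def remv_def by simp
  moreover have "erun [] = 0" unfolding erun_def by simp
  ultimately show ?case using S0 C1 tau1 by (simp add: bij_betw_def)
next
  case (Suc n)
  have bij: "bij_betw phi (schroeder n) (Cset (Suc n))"
    and inv: "\<And>p. p \<in> schroeder n \<Longrightarrow> labC (phi p) = erun p \<and> (\<forall>k\<ge>1. tau_perm k (phi p) = tau_path k p)"
    using Suc.IH by auto
  let ?A = "schroeder (Suc n)"
  let ?S1 = "Sigma (schroeder n) (\<lambda>p. choices (erun p))"
  let ?S2 = "Sigma (Cset (Suc n)) (\<lambda>s. choices (labC s))"
  let ?B = "Cset (Suc (Suc n))"
  define f1 where "f1 p = (parS p, choS p)" for p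
  define f2 :: "step list \<times> (bool \<times> nat) \<Rightarrow> nat list \<times> (bool \<times> nat)"
    where "f2 x = (phi (fst x), snd x)" for x
  define f3 :: "nat list \<times> (bool \<times> nat) \<Rightarrow> nat list" where "f3 x = chC (fst x) (snd x)" for x
  have b1: "bij_betw f1 ?A ?S1"
  proof (rule bij_betw_byWitness[where f' = "\<lambda>x. chS (fst x) (snd x)"])
    show "\<forall>a\<in>?A. chS (fst (f1 a)) (snd (f1 a)) = a"
    proof
      fix a assume "a \<in> ?A"
      then show "chS (fst (f1 a)) (snd (f1 a)) = a" unfolding f1_def using parent_path[of a n] by simp
    qed
    show "\<forall>a'\<in>?S1. f1 (chS (fst a') (snd a')) = a'"
    proof
      fix x assume x: "x \<in> ?S1"
      obtain p c where pc: "x = (p, c)" by (cases x)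
      have "p \<in> schroeder n" "c \<in> choices (erun p)" using x pc by auto
      note C = child_path[OF this]
      show "f1 (chS (fst x) (snd x)) = x" unfolding f1_def pc using C by simp
    qed
    show "f1 ` ?A \<subseteq> ?S1"
    proof
      fix y assume "y \<in> f1 ` ?A"
      then obtain a where a: "a \<in> ?A" "y = f1 a" by blast
      note P = parent_path[OF a(1)]
      show "y \<in> ?S1" unfolding a(2) f1_def using P by simp
    qed
    show "(\<lambda>x. chS (fst x) (snd x)) ` ?S1 \<subseteq> ?A"
    proof
      fix y assume "y \<in> (\<lambda>x. chS (fst x) (snd x)) ` ?S1"
      then obtain p c where pc: "p \<in> schroeder n" "c \<in> choices (erun p)" "y = chS p c" by auto
      note C = child_path[OF pc(1,2)]
      show "y \<in> ?A" unfolding pc(3) using C by simp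
    qed
  qed
  have b2: "bij_betw f2 ?S1 ?S2"
  proof (rule bij_betw_byWitness[where f' = "\<lambda>x. (inv_into (schroeder n) phi (fst x), snd x)"])
    show "\<forall>a\<in>?S1. (inv_into (schroeder n) phi (fst (f2 a)), snd (f2 a)) = a"
    proof
      fix x assume x: "x \<in> ?S1"
      obtain p c where pc: "x = (p, c)" by (cases x)
      have p: "p \<in> schroeder n" using x pc by auto
      have "inv_into (schroeder n) phi (phi p) = p" using bij_betw_inv_into_left[OF bij p] .
      then show "(inv_into (schroeder n) phi (fst (f2 x)), snd (f2 x)) = x" unfolding f2_def pc by simp
    qed
    show "\<forall>a'\<in>?S2. f2 (inv_into (schroeder n) phi (fst a'), snd a') = a'"
    proof
      fix x assume x: "x \<in> ?S2"
      obtain s c where sc: "x = (s, c)" by (cases x)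
      have s: "s \<in> Cset (Suc n)" using x sc by auto
      have "phi (inv_into (schroeder n) phi s) = s" using bij_betw_inv_into_right[OF bij s] .
      then show "f2 (inv_into (schroeder n) phi (fst x), snd x) = x" unfolding f2_def sc by simp
    qed
    show "f2 ` ?S1 \<subseteq> ?S2"
    proof
      fix y assume "y \<in> f2 ` ?S1"
      then obtain p c where pc: "p \<in> schroeder n" "c \<in> choices (erun p)" "y = f2 (p, c)" by auto
      have "phi p \<in> Cset (Suc n)" using bij pc(1) bij_betwE by blast
      moreover have "labC (phi p) = erun p" using inv[OF pc(1)] by simp
      ultimately show "y \<in> ?S2" unfolding pc(3) f2_def using pc(2) by simp
    qed
    show "(\<lambda>x. (inv_into (schroeder n) phi (fst x), snd x)) ` ?S2 \<subseteq> ?S1"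
    proof
      fix y assume "y \<in> (\<lambda>x. (inv_into (schroeder n) phi (fst x), snd x)) ` ?S2"
      then obtain s c where sc: "s \<in> Cset (Suc n)" "c \<in> choices (labC s)"
        "y = (inv_into (schroeder n) phi s, c)" by auto
      have "s \<in> phi ` schroeder n" using bij sc(1) unfolding bij_betw_def by simp
      then have p: "inv_into (schroeder n) phi s \<in> schroeder n" by (rule inv_into_into)
      have "phi (inv_into (schroeder n) phi s) = s" using bij_betw_inv_into_right[OF bij sc(1)] .
      then have "erun (inv_into (schroeder n) phi s) = labC s" using inv[OF p] by simp
      then show "y \<in> ?S1" using sc p by simp
    qed
  qed
  have m1: "1 \<le> Suc n" by simp
  have b3: "bij_betw f3 ?S2 ?B"
  proof (rule bij_betw_byWitness[where f' = "\<lambda>t. (parC t, choC t)"])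
    show "\<forall>a\<in>?S2. (parC (f3 a), choC (f3 a)) = a"
    proof
      fix x assume x: "x \<in> ?S2"
      obtain s c where sc: "x = (s, c)" by (cases x)
      have "s \<in> Cset (Suc n)" "c \<in> choices (labC s)" using x sc by auto
      note C = child_props[OF this(1) m1 this(2)]
      show "(parC (f3 x), choC (f3 x)) = x" unfolding f3_def sc using C by simp
    qed
    show "\<forall>a'\<in>?B. f3 (parC a', choC a') = a'"
    proof
      fix t assume t: "t \<in> ?B"
      note P = parent_props[OF t m1]
      show "f3 (parC t, choC t) = t" unfolding f3_def using P by simp
    qed
    show "f3 ` ?S2 \<subseteq> ?B"
    proof
      fix y assume "y \<in> f3 ` ?S2"
      then obtain s c where sc: "s \<in> Cset (Suc n)" "c \<in> choices (labC s)" "y = f3 (s, c)" by auto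
      note C = child_props[OF sc(1) m1 sc(2)]
      show "y \<in> ?B" unfolding sc(3) f3_def using C by simp
    qed
    show "(\<lambda>t. (parC t, choC t)) ` ?B \<subseteq> ?S2"
    proof
      fix y assume "y \<in> (\<lambda>t. (parC t, choC t)) ` ?B"
      then obtain t where t: "t \<in> ?B" "y = (parC t, choC t)" by blast
      note P = parent_props[OF t(1) m1]
      show "y \<in> ?S2" unfolding t(2) using P by simp
    qed
  qed
  have comp: "bij_betw (f3 \<circ> f2 \<circ> f1) ?A ?B" using bij_betw_trans[OF bij_betw_trans[OF b1 b2] b3] by (simp add: comp_assoc)
  have eq: "\<And>p. p \<in> ?A \<Longrightarrow> phi p = (f3 \<circ> f2 \<circ> f1) p"
  proof -
    fix p assume "p \<in> ?A"
    then have "p \<noteq> []" using S_iff by auto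
    then show "phi p = (f3 \<circ> f2 \<circ> f1) p" unfolding f1_def f2_def f3_def by (simp add: phi.simps[of p])
  qed
  have B: "bij_betw phi ?A ?B" using bij_betw_cong[of ?A phi "f3 \<circ> f2 \<circ> f1" ?B] comp eq by blast
  have I: "\<forall>p\<in>?A. labC (phi p) = erun p \<and> (\<forall>k\<ge>1. tau_perm k (phi p) = tau_path k p)"
  proof
    fix p assume p: "p \<in> ?A"
    note PP = parent_path[OF p]
    have pp: "parS p \<in> schroeder n" "choS p \<in> choices (erun (parS p))" using PP by auto
    have ne: "p \<noteq> []" using p S_iff by auto
    have ph: "phi p = chC (phi (parS p)) (choS p)" using ne by (simp add: phi.simps[of p])
    have sC: "phi (parS p) \<in> Cset (Suc n)" using bij pp(1) bij_betwE by blast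
    have cc: "choS p \<in> choices (labC (phi (parS p)))" using pp inv by simp
    note CP = child_props[OF sC m1 cc]
    note CS = child_path[OF pp(1,2)]
    have "labC (phi p) = snd (choS p)" using CP ph by simp
    also have "\<dots> = erun p" unfolding choS_def by simp
    finally have l: "labC (phi p) = erun p" .
    have "\<forall>k\<ge>1. tau_perm k (phi p) = tau_path k p"
    proof (intro allI impI)
      fix k :: nat assume k: "1 \<le> k"
      have "tau_perm k (phi p) = tau_perm k (phi (parS p)) + (snd (choS p) choose (k - 1))"
        using CP ph k by simp
      also have "\<dots> = tau_path k (parS p) + (snd (choS p) choose (k - 1))" using inv[OF pp(1)] k by simp
      also have "\<dots> = tau_path k (chS (parS p) (choS p))" using CS k by simp
      also have "\<dots> = tau_path k p" using PP by simp
      finally show "tau_perm k (phi p) = tau_path k p" .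
    qed
    then show "labC (phi p) = erun p \<and> (\<forall>k\<ge>1. tau_perm k (phi p) = tau_path k p)" using l by simp
  qed
  show ?case using B I by simp
qed

lemma ht_walk:
  "(\<forall>x\<in>set (walk p ss). snd x - fst x \<le> d) \<longleftrightarrow>
   (\<forall>h\<in>set (heights p ss). h \<le> d) \<and> snd (endp p ss) - fst (endp p ss) \<le> d"
proof (induction ss arbitrary: p)
  case Nil then show ?case by simp
next
  case (Cons s ss)
  obtain a c where p: "p = (a, c)" by (cases p)
  have hd: "step_end p s \<in> set (walk (step_end p s) ss)" by (cases ss) auto
  note IH = Cons.IH[of "step_end p s"]
  show ?case
  proof
    assume L: "\<forall>x\<in>set (walk p (s # ss)). snd x - fst x \<le> d"
    then have "\<forall>x\<in>set (walk (step_end p s) ss). snd x - fst x \<le> d" by simp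
    then have "(\<forall>h\<in>set (heights (step_end p s) ss). h \<le> d) \<and> snd (endp (step_end p s) ss) - fst (endp (step_end p s) ss) \<le> d"
      using IH by blast
    moreover have "c - a \<le> d" using L p by simp
    ultimately show "(\<forall>h\<in>set (heights p (s # ss)). h \<le> d) \<and> snd (endp p (s # ss)) - fst (endp p (s # ss)) \<le> d"
      using p by auto
  next
    assume R: "(\<forall>h\<in>set (heights p (s # ss)). h \<le> d) \<and> snd (endp p (s # ss)) - fst (endp p (s # ss)) \<le> d"
    then have "(\<forall>h\<in>set (heights (step_end p s) ss). h \<le> d) \<and> snd (endp (step_end p s) ss) - fst (endp (step_end p s) ss) \<le> d"
      using p by auto
    then have rest: "\<forall>x\<in>set (walk (step_end p s) ss). snd x - fst x \<le> d" using IH by blast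
    have "c - a \<le> d"
    proof (cases "s = North")
      case True
      then have "step_end p s = (a, c + 1)" using p by simp
      then have "snd (step_end p s) - fst (step_end p s) \<le> d" using rest hd by blast
      then show ?thesis using \<open>step_end p s = (a, c + 1)\<close> by simp
    next
      case False
      then show ?thesis using R p by auto
    qed
    then show "\<forall>x\<in>set (walk p (s # ss)). snd x - fst x \<le> d" using rest p by simp
  qed
qed

lemma no_cross_tau:
  assumes p: "p \<in> schroeder n" and k: "2 \<le> k"
  shows "no_cross (int k - 2) p \<longleftrightarrow> tau_path k p = 0"
proof -
  have e: "endp (0, 0) p = (int n, int n)" using p S_iff by auto
  have "no_cross (int k - 2) p \<longleftrightarrow> (\<forall>x\<in>set (walk (0, 0) p). snd x - fst x \<le> int k - 2)"
    unfolding no_cross_def by auto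
  also have "\<dots> \<longleftrightarrow> (\<forall>h\<in>set (heights (0, 0) p). h \<le> int k - 2)"
    using ht_walk[of "(0,0)" p "int k - 2"] e k by simp
  also have "\<dots> \<longleftrightarrow> (\<forall>h\<in>set (heights (0, 0) p). (nat h choose (k - 1)) = 0)"
  proof -
    have "h \<le> int k - 2 \<longleftrightarrow> nat h < k - 1" for h using k by auto
    then show ?thesis by simp
  qed
  also have "\<dots> \<longleftrightarrow> sum_list (map (\<lambda>h. nat h choose (k - 1)) (heights (0, 0) p)) = 0"
    by (simp add: sum_list_eq_0_iff)
  also have "\<dots> \<longleftrightarrow> tau_path k p = 0"
    unfolding tau_path_def using k by simp
  finally show ?thesis .
qed

lemma contains_inc:
  assumes d: "distinct t"
  shows "contains t [1..<k+1] \<longleftrightarrow> tau_perm k t \<noteq> 0"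
proof -
  have nth_p: "\<And>i. i < k \<Longrightarrow> [1..<k+1] ! i = Suc i" by (simp del: upt_Suc)
  have "contains t [1..<k+1] \<longleftrightarrow> (\<exists>ix. sorted_wrt (<) ix \<and> length ix = k \<and> (\<forall>i\<in>set ix. i < length t)
        \<and> (\<forall>i<k. \<forall>j<k. (t ! (ix ! i) < t ! (ix ! j)) = (i < j)))"
    unfolding contains_idx using nth_p by (simp del: upt_Suc)
  also have "\<dots> \<longleftrightarrow> IS k t \<noteq> {}"
  proof
    assume "\<exists>ix. sorted_wrt (<) ix \<and> length ix = k \<and> (\<forall>i\<in>set ix. i < length t)
        \<and> (\<forall>i<k. \<forall>j<k. (t ! (ix ! i) < t ! (ix ! j)) = (i < j))"
    then obtain ix where ix: "sorted_wrt (<) ix" "length ix = k" "\<forall>i\<in>set ix. i < length t"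
        "\<forall>i<k. \<forall>j<k. (t ! (ix ! i) < t ! (ix ! j)) = (i < j)" by blast
    have dix: "distinct ix" using ix(1) by (simp add: strict_sorted_iff)
    have "set ix \<in> IS k t"
      unfolding IS_def
    proof (intro CollectI conjI)
      show "set ix \<subseteq> {..<length t}" using ix(3) by auto
      show "card (set ix) = k" using dix ix(2) distinct_card by blast
      show "\<forall>i\<in>set ix. \<forall>j\<in>set ix. i < j \<longrightarrow> t ! i < t ! j"
      proof (intro ballI impI)
        fix i j assume "i \<in> set ix" "j \<in> set ix" "i < j"
        then obtain a b where ab: "a < k" "b < k" "ix ! a = i" "ix ! b = j" using ix(2) in_set_conv_nth[of i ix] in_set_conv_nth[of j ix] by auto
        have "a < b"
        proof (rule ccontr)
          assume "\<not> a < b"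
          then have "b \<le> a" by simp
          then have "ix ! b \<le> ix ! a"
          proof (cases "b = a")
            case False
            then have "b < a" using \<open>b \<le> a\<close> by simp
            then show ?thesis using sorted_wrt_nth_less[OF ix(1) \<open>b < a\<close>] ab ix(2) by simp
          qed simp
          then show False using ab \<open>i < j\<close> by simp
        qed
        then have "t ! (ix ! a) < t ! (ix ! b)" using ix(4) ab(1,2) by blast
        then show "t ! i < t ! j" using ab by simp
      qed
    qed
    then show "IS k t \<noteq> {}" by blast
  next
    assume "IS k t \<noteq> {}"
    then obtain I where I: "I \<in> IS k t" by blast
    then have I': "I \<subseteq> {..<length t}" "card I = k" "\<forall>i\<in>I. \<forall>j\<in>I. i < j \<longrightarrow> t ! i < t ! j"
      unfolding IS_def by auto
    have fI: "finite I" using I'(1) finite_subset by blast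
    define ix where "ix = sorted_list_of_set I"
    have s: "sorted_wrt (<) ix" unfolding ix_def by (rule strict_sorted_list_of_set)
    have l: "length ix = k" unfolding ix_def using I'(2) by simp
    have st: "set ix = I" unfolding ix_def using fI by simp
    have "\<forall>i<k. \<forall>j<k. (t ! (ix ! i) < t ! (ix ! j)) = (i < j)"
    proof (intro allI impI)
      fix i j assume ij: "i < k" "j < k"
      have m: "ix ! i \<in> I" "ix ! j \<in> I" using st l ij nth_mem by blast+
      consider "i < j" | "i = j" | "j < i" by linarith
      then show "(t ! (ix ! i) < t ! (ix ! j)) = (i < j)"
      proof cases
        case 1
        then have "ix ! i < ix ! j" using s l ij sorted_wrt_nth_less by blast
        then show ?thesis using I'(3) m 1 by blast
      next
        case 2 then show ?thesis by simp
      next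
        case 3
        then have "ix ! j < ix ! i" using s l ij sorted_wrt_nth_less by blast
        then have "t ! (ix ! j) < t ! (ix ! i)" using I'(3) m by blast
        then show ?thesis using 3 by simp
      qed
    qed
    then show "\<exists>ix. sorted_wrt (<) ix \<and> length ix = k \<and> (\<forall>i\<in>set ix. i < length t)
        \<and> (\<forall>i<k. \<forall>j<k. (t ! (ix ! i) < t ! (ix ! j)) = (i < j))"
      using s l st I'(1) by (intro exI[of _ ix]) auto
  qed
  also have "\<dots> \<longleftrightarrow> tau_perm k t \<noteq> 0" unfolding tau_IS using finite_IS by simp
  finally show ?thesis .
qed

lemma bij_restrict:
  assumes "bij_betw f A B" "\<forall>a\<in>A. P a \<longleftrightarrow> Q (f a)"
  shows "bij_betw f {a\<in>A. P a} {b\<in>B. Q b}"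
proof -
  have "inj_on f {a\<in>A. P a}" using assms(1) unfolding bij_betw_def by (rule conjE) (erule inj_on_subset, blast)
  moreover have "f ` {a\<in>A. P a} = {b\<in>B. Q b}"
  proof
    show "f ` {a\<in>A. P a} \<subseteq> {b\<in>B. Q b}"
    proof
      fix b assume "b \<in> f ` {a\<in>A. P a}"
      then obtain a where "a \<in> A" "P a" "b = f a" by blast
      then show "b \<in> {b\<in>B. Q b}" using assms bij_betwE by blast
    qed
    show "{b\<in>B. Q b} \<subseteq> f ` {a\<in>A. P a}"
    proof
      fix b assume b: "b \<in> {b\<in>B. Q b}"
      then obtain a where "a \<in> A" "f a = b" using assms(1) unfolding bij_betw_def by auto
      then show "b \<in> f ` {a\<in>A. P a}" using assms(2) b by auto
    qed
  qed
  ultimately show ?thesis unfolding bij_betw_def by simp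
qed

theorem mainTheorem8:
  fixes n :: nat
  shows "\<exists>\<phi>. bij_betw \<phi> (schroeder n) (avoiders (n + 1) {[1,2,4,3], [2,1,4,3]})
           \<and> (\<forall>\<pi> \<in> schroeder n. \<forall>k \<ge> 1. tau_perm k (\<phi> \<pi>) = tau_path k \<pi>)
           \<and> (\<forall>k \<ge> 2. bij_betw \<phi> {\<pi> \<in> schroeder n. no_cross (int k - 2) \<pi>}
                        (avoiders (n + 1) {[1,2,4,3], [2,1,4,3], [1..<k+1]}))"
proof (intro exI conjI)
  note M = phi_main[of n]
  have A: "avoiders (n + 1) {[1,2,4,3], [2,1,4,3]} = Cset (Suc n)" using Cset_avoiders by simp
  show B: "bij_betw phi (schroeder n) (avoiders (n + 1) {[1,2,4,3], [2,1,4,3]})" using M A by simp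
  show T: "\<forall>\<pi> \<in> schroeder n. \<forall>k \<ge> 1. tau_perm k (phi \<pi>) = tau_path k \<pi>" using M by simp
  show "\<forall>k \<ge> 2. bij_betw phi {\<pi> \<in> schroeder n. no_cross (int k - 2) \<pi>}
                        (avoiders (n + 1) {[1,2,4,3], [2,1,4,3], [1..<k+1]})"
  proof (intro allI impI)
    fix k :: nat assume k: "2 \<le> k"
    have e: "avoiders (n + 1) {[1,2,4,3], [2,1,4,3], [1..<k+1]} =
      {t \<in> avoiders (n + 1) {[1,2,4,3], [2,1,4,3]}. \<not> contains t [1..<k+1]}"
      unfolding avoiders_def by auto
    have "\<forall>\<pi>\<in>schroeder n. no_cross (int k - 2) \<pi> \<longleftrightarrow> \<not> contains (phi \<pi>) [1..<k+1]"
    proof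
      fix p assume p: "p \<in> schroeder n"
      have "phi p \<in> Cset (Suc n)" using M p bij_betwE by blast
      then have d: "distinct (phi p)" using Cset_D by blast
      have "no_cross (int k - 2) p \<longleftrightarrow> tau_path k p = 0" using no_cross_tau[OF p k] .
      also have "\<dots> \<longleftrightarrow> tau_perm k (phi p) = 0" using T p k by simp
      also have "\<dots> \<longleftrightarrow> \<not> contains (phi p) [1..<k+1]" using contains_inc[OF d, of k] by simp
      finally show "no_cross (int k - 2) p \<longleftrightarrow> \<not> contains (phi p) [1..<k+1]" .
    qed
    then show "bij_betw phi {\<pi> \<in> schroeder n. no_cross (int k - 2) \<pi>}
                        (avoiders (n + 1) {[1,2,4,3], [2,1,4,3], [1..<k+1]})"
      unfolding e using bij_restrict[OF B] by simp
  qed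
qed


end
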